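(* $$\sum_{n\ge0}T(n)q^n=\sum_{n\ge0}\frac{q^{2n(n+1)}(q;q^2)_n(-q^{2n+2};q)_\infty}{(q^2;q^2)_n},$$ where $T(n)$ is the number of partitions $\lambda$ of $n$ such that: $m_j(\lambda)\le 1$ for odd $j$; $m_j(\lambda)=0$ for odd $j<R_1(\lambda)+2$; $m_j(\lambda)\ge2$ for even $j$ with $0<j<R_1(\lambda)$; and no two consecutive integers both appear as parts of $\lambda$.
   Context: $m_j(\lambda)$ is the multiplicity of $j$ in $\lambda$; $R_1(\lambda)$ is the largest part of multiplicity at least $2$, or $0$ if none. $(x;q)_n=\prod_{h=0}^{n-1}(1-xq^h)$, $(x;q)_0=1$, $(x;q)_\infty=\prod_{h\ge0}(1-xq^h)$; $T(0)=1$ (empty partition). *)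

theory Defs
  imports "HOL-Analysis.Analysis" "HOL-Library.Multiset"
begin

definition qpoch :: "complex \<Rightarrow> complex \<Rightarrow> nat \<Rightarrow> complex" where
  "qpoch x q n = (\<Prod>h<n. 1 - x * q ^ h)"

definition qpoch_inf :: "complex \<Rightarrow> complex \<Rightarrow> complex" where
  "qpoch_inf x q = (\<Prod>h. 1 - x * q ^ h)"

definition partitions :: "nat \<Rightarrow> nat multiset set" where
  "partitions n = {M. (\<forall>x\<in>#M. 0 < x) \<and> sum_mset M = n}"

definition R1 :: "nat multiset \<Rightarrow> nat" where
  "R1 M = Max ({j. 2 \<le> count M j} \<union> {0})"

definition T_cond :: "nat multiset \<Rightarrow> bool" where
  "T_cond M \<longleftrightarrow>
     (\<forall>j. odd j \<longrightarrow> count M j \<le> 1) \<and>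
     (\<forall>j. odd j \<and> j < R1 M + 2 \<longrightarrow> count M j = 0) \<and>
     (\<forall>j. even j \<and> 0 < j \<and> j < R1 M \<longrightarrow> 2 \<le> count M j) \<and>
     (\<forall>j. \<not> (j \<in># M \<and> Suc j \<in># M))"

definition T :: "nat \<Rightarrow> nat" where
  "T n = card {M \<in> partitions n. T_cond M}"

end

theory Submission
  imports Defs
begin
definition poch1 :: "complex \<Rightarrow> nat \<Rightarrow> complex" where
  "poch1 p n = (\<Prod>h<n. 1 - p ^ Suc h)"

lemma poch1_0[simp]: "poch1 p 0 = 1" by (simp add: poch1_def)
lemma poch1_Suc: "poch1 p (Suc n) = poch1 p n * (1 - p ^ Suc n)"
  by (simp add: poch1_def)

lemma pow_ne_1: assumes "norm (p::complex) < 1" "k > 0" shows "p ^ k \<noteq> 1"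
proof
  assume "p ^ k = 1"
  hence "norm p ^ k = 1" by (metis norm_one norm_power)
  moreover have "norm p ^ k < 1" using assms by (simp add: power_less_one_iff)
  ultimately show False by simp
qed

lemma poch1_nz: assumes "norm p < 1" shows "poch1 p n \<noteq> 0"
proof (induction n)
  case (Suc n)
  have "p ^ Suc n \<noteq> 1" using pow_ne_1[OF assms, of "Suc n"] by simp
  then show ?case using Suc by (simp add: poch1_Suc del: power_Suc)
qed simp

definition qbin :: "complex \<Rightarrow> nat \<Rightarrow> nat \<Rightarrow> complex" where
  "qbin p n i = (if i \<le> n then poch1 p n / (poch1 p i * poch1 p (n - i)) else 0)"

lemma qbin_0[simp]: assumes "norm p < 1" shows "qbin p n 0 = 1"
  using poch1_nz[OF assms] by (simp add: qbin_def)

lemma pascal_alg: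
  fixes A a b x z :: complex
  assumes "a \<noteq> 0" "b \<noteq> 0" "1 - x \<noteq> 0" "1 - z \<noteq> 0"
  shows "A * (1 - x * z) / ((a * (1 - x)) * (b * (1 - z))) = A / ((a * (1 - x)) * b) + z * (A / (a * (b * (1 - z))))"
proof -
  have e: "A * (1 - x * z) = A * (1 - z) + A * (z * (1 - x))" by (simp add: algebra_simps)
  have "A * (1 - x * z) / ((a * (1 - x)) * (b * (1 - z)))
     = A * (1 - z) / ((a * (1 - x)) * (b * (1 - z))) + A * (z * (1 - x)) / ((a * (1 - x)) * (b * (1 - z)))"
    by (subst e) (rule add_divide_distrib)
  also have "A * (1 - z) / ((a * (1 - x)) * (b * (1 - z))) = A / ((a * (1 - x)) * b)"
    using assms by simp
  also have "A * (z * (1 - x)) / ((a * (1 - x)) * (b * (1 - z))) = z * (A / (a * (b * (1 - z))))"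
    using assms by simp
  finally show ?thesis .
qed

lemma qbin_pascal:
  assumes "norm p < 1" "i \<ge> 1"
  shows "qbin p (Suc n) i = qbin p n i + p ^ (Suc n - i) * qbin p n (i - 1)"
proof (cases "i \<le> n")
  case True
  obtain j where j: "i = Suc j" using assms(2) by (cases i) auto
  define k where "k = n - i"
  have k: "n = j + Suc k" using True j by (simp add: k_def)
  have nz: "\<And>m. poch1 p m \<noteq> 0" using poch1_nz[OF assms(1)] .
  have e1: "Suc n - i = Suc k" using j k by simp
  have e2: "n - i = k" using j k by simp
  have e3: "n - (i-1) = Suc k" using j k by simp
  have "qbin p (Suc n) i = poch1 p (Suc n) / (poch1 p (Suc j) * poch1 p (Suc k))"
    using True j e1 by (simp add: qbin_def)
  moreover have "qbin p n i = poch1 p n / (poch1 p (Suc j) * poch1 p k)"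
    using True j e2 by (simp add: qbin_def)
  moreover have "qbin p n (i-1) = poch1 p n / (poch1 p j * poch1 p (Suc k))"
    using True j e3 by (simp add: qbin_def)
  moreover have "p ^ Suc n = p ^ Suc j * p ^ Suc k" using k by (simp add: power_add[symmetric])
  moreover have "1 - p ^ Suc j \<noteq> 0" "1 - p ^ Suc k \<noteq> 0"
    using pow_ne_1[OF assms(1), of "Suc j"] pow_ne_1[OF assms(1), of "Suc k"] by auto
  ultimately show ?thesis
    using nz e1 pascal_alg[of "poch1 p j" "poch1 p k" "p ^ Suc j" "p ^ Suc k" "poch1 p n"]
    by (simp add: poch1_Suc j del: power_Suc)
next
  case False
  show ?thesis
  proof (cases "i = Suc n")
    case True
    then show ?thesis using poch1_nz[OF assms(1)] by (simp add: qbin_def)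
  next
    case False
    then show ?thesis using \<open>\<not> i \<le> n\<close> by (simp add: qbin_def)
  qed
qed

lemma qbinomial_finite:
  assumes "norm p < 1"
  shows "(\<Prod>h<n. 1 + y * p ^ h) = (\<Sum>i\<le>n. y ^ i * p ^ (i choose 2) * qbin p n i)"
proof (induction n)
  case 0
  then show ?case using assms by (simp add: numeral_2_eq_2)
next
  case (Suc n)
  have "(\<Prod>h<Suc n. 1 + y * p ^ h) = (\<Sum>i\<le>n. y ^ i * p ^ (i choose 2) * qbin p n i) * (1 + y * p ^ n)"
    using Suc by simp
  also have "\<dots> = (\<Sum>i\<le>n. y ^ i * p ^ (i choose 2) * qbin p n i)
        + (\<Sum>i\<le>n. y ^ Suc i * p ^ (Suc i choose 2) * (p ^ (Suc n - Suc i) * qbin p n i))"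
  proof -
    have "\<And>i. i \<le> n \<Longrightarrow> y ^ i * p ^ (i choose 2) * qbin p n i * (y * p ^ n)
        = y ^ Suc i * p ^ (Suc i choose 2) * (p ^ (Suc n - Suc i) * qbin p n i)"
    proof -
      fix i assume "i \<le> n"
      hence "n = i + (n - i)" by simp
      hence "p ^ n = p ^ i * p ^ (n - i)" by (metis power_add)
      moreover have "Suc i choose 2 = (i choose 2) + i" by (simp add: numeral_2_eq_2)
      ultimately show "y ^ i * p ^ (i choose 2) * qbin p n i * (y * p ^ n)
        = y ^ Suc i * p ^ (Suc i choose 2) * (p ^ (Suc n - Suc i) * qbin p n i)"
        by (simp add: power_add algebra_simps)
    qed
    hence "(\<Sum>i\<le>n. y ^ i * p ^ (i choose 2) * qbin p n i * (y * p ^ n))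
        = (\<Sum>i\<le>n. y ^ Suc i * p ^ (Suc i choose 2) * (p ^ (Suc n - Suc i) * qbin p n i))"
      by (intro sum.cong) auto
    moreover have "(\<Sum>i\<le>n. y ^ i * p ^ (i choose 2) * qbin p n i) * (1 + y * p ^ n)
       = (\<Sum>i\<le>n. y ^ i * p ^ (i choose 2) * qbin p n i) + (\<Sum>i\<le>n. y ^ i * p ^ (i choose 2) * qbin p n i * (y * p ^ n))"
      by (simp add: distrib_left sum_distrib_right)
    ultimately show ?thesis by simp
  qed
  also have "\<dots> = (\<Sum>i\<le>Suc n. y ^ i * p ^ (i choose 2) * qbin p (Suc n) i)"
  proof -
    have A: "(\<Sum>i\<le>Suc n. y ^ i * p ^ (i choose 2) * qbin p n i) = (\<Sum>i\<le>n. y ^ i * p ^ (i choose 2) * qbin p n i)" (is "?X = ?S")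
      by (simp add: qbin_def)
    have B: "(\<Sum>i\<le>Suc n. y ^ i * p ^ (i choose 2) * qbin p (Suc n) i)
      = 1 + (\<Sum>i\<le>n. y ^ Suc i * p ^ (Suc i choose 2) * qbin p (Suc n) (Suc i))"
      using assms by (simp add: sum.atMost_Suc_shift numeral_2_eq_2 del: sum.atMost_Suc)
    have C: "(\<Sum>i\<le>Suc n. y ^ i * p ^ (i choose 2) * qbin p n i)
      = 1 + (\<Sum>i\<le>n. y ^ Suc i * p ^ (Suc i choose 2) * qbin p n (Suc i))" (is "_ = 1 + ?U")
      using assms by (simp add: sum.atMost_Suc_shift numeral_2_eq_2 del: sum.atMost_Suc)
    have D: "qbin p (Suc n) (Suc i) = qbin p n (Suc i) + p ^ (Suc n - Suc i) * qbin p n i" for i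
      using qbin_pascal[OF assms, of "Suc i" n] by simp
    have E: "(\<Sum>i\<le>n. y ^ Suc i * p ^ (Suc i choose 2) * qbin p (Suc n) (Suc i))
      = (\<Sum>i\<le>n. y ^ Suc i * p ^ (Suc i choose 2) * qbin p n (Suc i))
        + (\<Sum>i\<le>n. y ^ Suc i * p ^ (Suc i choose 2) * (p ^ (Suc n - Suc i) * qbin p n i))"
      unfolding D distrib_left sum.distrib ..
    have SU: "?S = 1 + ?U" using A C by (rule subst)
    show ?thesis unfolding B E add.assoc[symmetric] SU ..
  qed
  finally show ?case .
qed

definition alpha :: "complex \<Rightarrow> nat \<Rightarrow> complex" where
  "alpha q i = (-1) ^ i * q ^ (i * (i - 1)) / poch1 (q^2) i"
definition gam :: "complex \<Rightarrow> nat \<Rightarrow> nat \<Rightarrow> complex" where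
  "gam q b i = (if 2 * i \<le> b then 1 / poch1 q (b - 2 * i) else 0)"
definition vv :: "complex \<Rightarrow> nat \<Rightarrow> complex" where
  "vv q b = (\<Sum>i\<le>b. alpha q i * gam q b i)"
definition uu :: "complex \<Rightarrow> nat \<Rightarrow> complex" where
  "uu q b = q ^ (b choose 2) / poch1 q b"

lemma alpha_rec:
  assumes "norm q < 1"
  shows "alpha q (Suc i) * (1 - q ^ (2 * Suc i)) = - (q ^ (2 * i) * alpha q i)"
proof -
  have n2: "norm (q^2) < 1" using assms by (simp add: norm_power power_less_one_iff)
  have nz: "poch1 (q^2) i \<noteq> 0" using poch1_nz[OF n2] .
  have nz2: "1 - q ^ (2 * Suc i) \<noteq> 0" using pow_ne_1[OF assms, of "2 * Suc i"] by simp
  have e: "Suc i * (Suc i - 1) = i * (i - 1) + 2 * i" by (cases i) auto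
  have p: "poch1 (q^2) (Suc i) = poch1 (q^2) i * (1 - q ^ (2 * Suc i))"
    by (simp only: poch1_Suc power_mult)
  show ?thesis unfolding alpha_def p e power_add using nz nz2 by (simp add: field_simps)
qed

lemma gam_rec1:
  assumes "norm q < 1"
  shows "gam q (Suc (Suc b)) i * (1 - q ^ (Suc (Suc b) - 2 * i)) = gam q (Suc b) i"
proof (cases "2 * i \<le> Suc b")
  case True
  have nz: "poch1 q (Suc b - 2 * i) \<noteq> 0" using poch1_nz[OF assms] .
  have nz2: "1 - q ^ Suc (Suc b - 2 * i) \<noteq> 0" using pow_ne_1[OF assms, of "Suc (Suc b - 2*i)"] by simp
  have e: "Suc (Suc b) - 2 * i = Suc (Suc b - 2 * i)" using True by simp
  show ?thesis using True nz nz2 unfolding gam_def e by (simp add: poch1_Suc del: power_Suc)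
next
  case False
  then show ?thesis by (auto simp: gam_def)
qed

lemma vv_rec:
  assumes "norm q < 1"
  shows "(1 - q ^ Suc (Suc b)) * vv q (Suc (Suc b)) = vv q (Suc b) - q ^ b * vv q b"
proof -
  define c where "c i = Suc (Suc b) - 2 * i" for i
  have split: "1 - q ^ Suc (Suc b) = (1 - q ^ c i) + q ^ c i * (1 - q ^ (2 * i))" if "2 * i \<le> Suc (Suc b)" for i
  proof -
    have "q ^ Suc (Suc b) = q ^ c i * q ^ (2 * i)" using that by (simp add: c_def power_add[symmetric])
    thus ?thesis by (simp add: algebra_simps)
  qed
  have "(1 - q ^ Suc (Suc b)) * vv q (Suc (Suc b))
     = (\<Sum>i\<le>Suc (Suc b). alpha q i * (gam q (Suc (Suc b)) i * (1 - q ^ c i)))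
     + (\<Sum>i\<le>Suc (Suc b). alpha q i * gam q (Suc (Suc b)) i * q ^ c i * (1 - q ^ (2 * i)))"
  proof -
    have "(1 - q ^ Suc (Suc b)) * (alpha q i * gam q (Suc (Suc b)) i)
       = alpha q i * (gam q (Suc (Suc b)) i * (1 - q ^ c i)) + alpha q i * gam q (Suc (Suc b)) i * q ^ c i * (1 - q ^ (2 * i))" for i
    proof (cases "2 * i \<le> Suc (Suc b)")
      case True then show ?thesis using split[OF True] by (simp add: algebra_simps)
    next
      case False then show ?thesis by (simp add: gam_def)
    qed
    thus ?thesis unfolding vv_def sum_distrib_left sum.distrib[symmetric] by simp
  qed
  also have "(\<Sum>i\<le>Suc (Suc b). alpha q i * (gam q (Suc (Suc b)) i * (1 - q ^ c i))) = vv q (Suc b)"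
  proof -
    have "(\<Sum>i\<le>Suc (Suc b). alpha q i * (gam q (Suc (Suc b)) i * (1 - q ^ c i)))
        = (\<Sum>i\<le>Suc (Suc b). alpha q i * gam q (Suc b) i)"
      using gam_rec1[OF assms] by (simp add: c_def)
    also have "\<dots> = vv q (Suc b)" unfolding vv_def by (simp add: gam_def)
    finally show ?thesis .
  qed
  also have "(\<Sum>i\<le>Suc (Suc b). alpha q i * gam q (Suc (Suc b)) i * q ^ c i * (1 - q ^ (2 * i)))
      = - (q ^ b * vv q b)"
  proof -
    have "(\<Sum>i\<le>Suc (Suc b). alpha q i * gam q (Suc (Suc b)) i * q ^ c i * (1 - q ^ (2 * i)))
       = (\<Sum>i\<le>Suc b. alpha q (Suc i) * gam q (Suc (Suc b)) (Suc i) * q ^ c (Suc i) * (1 - q ^ (2 * Suc i)))"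
      by (simp add: sum.atMost_Suc_shift del: sum.atMost_Suc)
    also have "\<dots> = (\<Sum>i\<le>Suc b. - (q ^ b * (alpha q i * gam q b i)))"
    proof (rule sum.cong[OF refl])
      fix i assume "i \<in> {..Suc b}"
      show "alpha q (Suc i) * gam q (Suc (Suc b)) (Suc i) * q ^ c (Suc i) * (1 - q ^ (2 * Suc i))
          = - (q ^ b * (alpha q i * gam q b i))"
      proof (cases "2 * i \<le> b")
        case True
        have g: "gam q (Suc (Suc b)) (Suc i) = gam q b i" using True by (simp add: gam_def)
        have e: "q ^ b = q ^ c (Suc i) * q ^ (2 * i)" using True by (simp add: c_def power_add[symmetric])
        have "alpha q (Suc i) * gam q (Suc (Suc b)) (Suc i) * q ^ c (Suc i) * (1 - q ^ (2 * Suc i))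
           = (alpha q (Suc i) * (1 - q ^ (2 * Suc i))) * gam q b i * q ^ c (Suc i)"
          unfolding g by (simp add: algebra_simps)
        also have "\<dots> = - (q ^ (2 * i) * alpha q i) * gam q b i * q ^ c (Suc i)"
          unfolding alpha_rec[OF assms] ..
        finally show ?thesis unfolding e by (simp add: algebra_simps)
      next
        case False then show ?thesis by (simp add: gam_def)
      qed
    qed
    also have "\<dots> = - (q ^ b * vv q b)"
      unfolding vv_def sum_negf sum_distrib_left[symmetric] by (simp add: gam_def)
    finally show ?thesis .
  qed
  finally show ?thesis by simp
qed

lemma uu_eq_vv:
  assumes "norm q < 1"
  shows "uu q b = vv q b"
proof (induction b rule: less_induct)
  case (less b)
  show ?case
  proof (cases b)
    case 0 then show ?thesis by (simp add: uu_def vv_def alpha_def gam_def numeral_2_eq_2)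
  next
    case (Suc b1)
    show ?thesis
    proof (cases b1)
      case 0 then show ?thesis using Suc by (simp add: uu_def vv_def alpha_def gam_def poch1_Suc numeral_2_eq_2)
    next
      case (Suc b2)
      have IH1: "uu q (Suc b2) = vv q (Suc b2)" and IH2: "uu q b2 = vv q b2"
        using less \<open>b = Suc b1\<close> Suc by auto
      have nz: "1 - q ^ Suc (Suc b2) \<noteq> 0" using pow_ne_1[OF assms, of "Suc (Suc b2)"] by simp
      have nzp: "poch1 q n \<noteq> 0" for n using poch1_nz[OF assms] .
      have nzp1: "1 - q ^ Suc b2 \<noteq> 0" using pow_ne_1[OF assms, of "Suc b2"] by simp
      have c1: "Suc (Suc b2) choose 2 = (Suc b2 choose 2) + Suc b2" by (simp add: numeral_2_eq_2)
      have c2: "Suc b2 choose 2 = (b2 choose 2) + b2" by (simp add: numeral_2_eq_2)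
      have "(1 - q ^ Suc (Suc b2)) * uu q (Suc (Suc b2)) = uu q (Suc b2) - q ^ b2 * uu q b2"
      proof -
        have "(1 - q ^ Suc (Suc b2)) * uu q (Suc (Suc b2)) = q ^ Suc b2 * uu q (Suc b2)"
          unfolding uu_def c1 power_add using nz nzp by (simp add: poch1_Suc del: power_Suc)
        moreover have "uu q (Suc b2) - q ^ b2 * uu q b2 = q ^ Suc b2 * uu q (Suc b2)"
        proof -
          have h: "q ^ b2 * uu q b2 = uu q (Suc b2) * (1 - q ^ Suc b2)"
            unfolding uu_def c2 power_add using nzp nzp1 by (simp add: poch1_Suc field_simps del: power_Suc)
          show ?thesis using h by (simp add: algebra_simps)
        qed
        ultimately show ?thesis by simp
      qed
      hence "(1 - q ^ Suc (Suc b2)) * uu q (Suc (Suc b2)) = (1 - q ^ Suc (Suc b2)) * vv q (Suc (Suc b2))"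
        using vv_rec[OF assms, of b2] IH1 IH2 by simp
      thus ?thesis using nz \<open>b = Suc b1\<close> Suc by simp
    qed
  qed
qed

definition LL :: "complex \<Rightarrow> nat \<Rightarrow> nat \<Rightarrow> complex" where
  "LL q a b = q ^ (2*a*(a+1)) / poch1 (q^2) a * (q ^ (b*(b+2*a+1)) / poch1 q b)"

definition RR :: "complex \<Rightarrow> nat \<Rightarrow> nat \<Rightarrow> nat \<Rightarrow> complex" where
  "RR q n i c = q ^ (2*n*(n+1)) * (-q) ^ i * q ^ (2*(i choose 2)) * q ^ ((2*n+2)*c + (c choose 2))
      / (poch1 (q^2) i * poch1 (q^2) (n-i) * poch1 q c)"

lemma choose2_int: "2 * int (x choose 2) = int x * (int x - 1)"
proof (induction x)
  case (Suc x)
  have "Suc x choose 2 = (x choose 2) + x" by (simp add: numeral_2_eq_2)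
  then show ?case using Suc by (simp add: algebra_simps)
qed (simp add: numeral_2_eq_2)

lemma choose2_nat: "2 * (x choose 2) = x * (x - 1)"
proof -
  have "int (2 * (x choose 2)) = int (x * (x - 1))"
    using choose2_int[of x] by (cases x) (simp_all add: algebra_simps)
  thus ?thesis by (simp only: of_nat_eq_iff)
qed

lemma exp_id:
  "2*(a+i)*(a+i+1) + i + 2*(i choose 2) + (2*(a+i)+2)*c + (c choose 2) + ((c+2*i) choose 2)
   = 2*a*(a+1) + (c+2*i)*((c+2*i)+2*a+1) + 2*(i choose 2)"
proof -
  have e1: "2 * int (i choose 2) = int i * (int i - 1)" by (rule choose2_int)
  have e2: "2 * int (c choose 2) = int c * (int c - 1)" by (rule choose2_int)
  have e3: "2 * int ((c+2*i) choose 2) = (int c + 2 * int i) * (int c + 2 * int i - 1)"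
    using choose2_int[of "c+2*i"] by simp
  have e4: "i*(i-1) = 2 * (i choose 2)" using choose2_nat[of i] by simp
  have "2 * int (2*(a+i)*(a+i+1) + i + 2*(i choose 2) + (2*(a+i)+2)*c + (c choose 2) + ((c+2*i) choose 2))
      = 2 * int (2*a*(a+1) + (c+2*i)*((c+2*i)+2*a+1) + 2*(i choose 2))"
    unfolding of_nat_add of_nat_mult of_nat_numeral of_nat_1
    using e1 e2 e3 by algebra
  thus ?thesis by (simp only: mult_cancel_left of_nat_eq_iff) simp
qed

lemma LL_eq_sum_RR:
  assumes "norm q < 1"
  shows "LL q a b = (\<Sum>i\<le>b. if 2*i \<le> b then RR q (a+i) i (b - 2*i) else 0)"
proof -
  have n2: "norm (q^2) < 1" using assms by (simp add: norm_power power_less_one_iff)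
  define F where "F = b*(b+2*a+1) - (b choose 2)"
  have Cb: "(b choose 2) \<le> b*(b+2*a+1)"
  proof -
    have h1: "2 * int (b choose 2) = int b * int b - int b" using choose2_int[of b] by (simp add: algebra_simps)
    have h2: "0 \<le> int b * int b" "0 \<le> int a * int b" "0 \<le> int b" by auto
    have "2 * int (b choose 2) \<le> 2 * (int b * int b + 2 * (int a * int b) + int b)" using h1 h2 by (smt (verit))
    hence "int (2 * (b choose 2)) \<le> int (2 * (b*(b+2*a+1)))" by (simp add: algebra_simps)
    hence "2 * (b choose 2) \<le> 2 * (b*(b+2*a+1))" by (simp only: of_nat_le_iff)
    thus ?thesis by simp
  qed
  define K where "K = q ^ (2*a*(a+1) + F) / poch1 (q^2) a"
  have "LL q a b = K * uu q b"
  proof -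
    have "q ^ (b*(b+2*a+1)) = q ^ F * q ^ (b choose 2)" using Cb by (simp add: F_def power_add[symmetric])
    thus ?thesis by (simp add: LL_def K_def uu_def power_add)
  qed
  also have "\<dots> = K * vv q b" using uu_eq_vv[OF assms] by simp
  also have "\<dots> = (\<Sum>i\<le>b. K * (alpha q i * gam q b i))" by (simp add: vv_def sum_distrib_left)
  also have "\<dots> = (\<Sum>i\<le>b. if 2*i \<le> b then RR q (a+i) i (b - 2*i) else 0)"
  proof (rule sum.cong[OF refl])
    fix i assume "i \<in> {..b}"
    show "K * (alpha q i * gam q b i) = (if 2*i \<le> b then RR q (a+i) i (b - 2*i) else 0)"
    proof (cases "2*i \<le> b")
      case True
      define c where "c = b - 2*i"
      have bc: "b = c + 2*i" using True by (simp add: c_def)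
      have ex: "2*(a+i)*(a+i+1) + i + 2*(i choose 2) + (2*(a+i)+2)*c + (c choose 2)
            = 2*a*(a+1) + F + i*(i-1)"
        using exp_id[of a i c] Cb choose2_nat[of i] unfolding F_def bc by linarith
      have "RR q (a+i) i c = (-1)^i * q ^ (2*(a+i)*(a+i+1) + i + 2*(i choose 2) + (2*(a+i)+2)*c + (c choose 2))
             / (poch1 (q^2) i * poch1 (q^2) a * poch1 q c)"
        unfolding RR_def power_minus[of q i] power_add by (simp add: mult_ac)
      also have "\<dots> = K * (alpha q i * gam q b i)"
        unfolding ex using True by (simp add: K_def alpha_def gam_def c_def power_add mult_ac)
      finally show ?thesis using True by (simp add: c_def)
    next
      case False then show ?thesis by (simp add: gam_def)
    qed
  qed
  finally show ?thesis .
qed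

lemma geom_partial_bound:
  fixes r :: real assumes "0 \<le> r" "r < 1"
  shows "(\<Sum>h<n. r ^ Suc h) \<le> r / (1 - r)"
proof -
  have "(\<Sum>h<n. r ^ Suc h) = r * (\<Sum>h<n. r ^ h)" by (simp add: sum_distrib_left)
  also have "\<dots> = r * ((1 - r ^ n) / (1 - r))" using assms by (simp add: sum_gp_strict)
  also have "\<dots> \<le> r * (1 / (1 - r))"
    using assms by (intro mult_left_mono divide_right_mono) auto
  finally show ?thesis by simp
qed

lemma one_minus_ge_exp:
  fixes x r :: real assumes "0 \<le> x" "x \<le> r" "r < 1"
  shows "exp (- (x / (1 - r))) \<le> 1 - x"
proof -
  have "exp (- (x / (1 - r))) \<le> exp (- (x / (1 - x)))"
    using assms by (auto intro!: divide_left_mono mult_pos_pos)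
  also have "exp (- (x / (1 - x))) = 1 / exp (x / (1 - x))" by (simp add: exp_minus field_simps)
  also have "\<dots> \<le> 1 / (1 + x / (1 - x))"
  proof -
    have p: "0 < 1 + x / (1 - x)" using assms by (intro add_pos_nonneg) auto
    have "1 + x / (1 - x) \<le> exp (x / (1 - x))" by (rule exp_ge_add_one_self)
    thus ?thesis using p by (intro divide_left_mono) auto
  qed
  also have "1 / (1 + x / (1 - x)) = 1 - x" using assms by (simp add: field_simps)
  finally show ?thesis .
qed

lemma poch1_lower:
  assumes "norm q < 1"
  shows "exp (- (norm q / (1 - norm q) / (1 - norm q))) \<le> norm (poch1 q n)"
proof -
  define r where "r = norm q"
  have r: "0 \<le> r" "r < 1" using assms by (auto simp: r_def)
  have "exp (- ((\<Sum>h<n. r ^ Suc h) / (1 - r))) = (\<Prod>h<n. exp (- (r ^ Suc h / (1 - r))))"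
    by (simp add: exp_sum[symmetric] sum_negf sum_divide_distrib)
  also have "\<dots> \<le> (\<Prod>h<n. 1 - r ^ Suc h)"
  proof (rule prod_mono)
    fix h assume "h \<in> {..<n}"
    have "r ^ Suc h \<le> r" using r by (simp add: power_le_one mult_left_le)
    thus "0 \<le> exp (- (r ^ Suc h / (1 - r))) \<and> exp (- (r ^ Suc h / (1 - r))) \<le> 1 - r ^ Suc h"
      using one_minus_ge_exp[of "r ^ Suc h" r] r by auto
  qed
  also have "\<dots> \<le> (\<Prod>h<n. norm (1 - q ^ Suc h))"
  proof (rule prod_mono)
    fix h assume "h \<in> {..<n}"
    have "r ^ Suc h \<le> 1" using r by (simp add: power_le_one mult_le_one)
    moreover have "1 - r ^ Suc h \<le> norm (1 - q ^ Suc h)"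
      using norm_triangle_ineq2[of 1 "q ^ Suc h"] by (simp add: r_def norm_power norm_mult del: power_Suc)
    ultimately show "0 \<le> 1 - r ^ Suc h \<and> 1 - r ^ Suc h \<le> norm (1 - q ^ Suc h)" by simp
  qed
  also have "\<dots> = norm (poch1 q n)" unfolding poch1_def by (rule prod_norm)
  finally have 1: "exp (- ((\<Sum>h<n. r ^ Suc h) / (1 - r))) \<le> norm (poch1 q n)" .
  have "(\<Sum>h<n. r ^ Suc h) / (1 - r) \<le> r / (1 - r) / (1 - r)"
    using r by (intro divide_right_mono[OF geom_partial_bound[OF r]]) auto
  hence "exp (- (r / (1 - r) / (1 - r))) \<le> exp (- ((\<Sum>h<n. r ^ Suc h) / (1 - r)))"
    by (intro exp_mono) linarith
  from order_trans[OF this 1] show ?thesis by (simp only: r_def)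
qed

lemma poch1_lower_pos:
  assumes "norm q < 1"
  shows "\<exists>C>0. \<forall>n. C \<le> norm (poch1 q n)"
  using poch1_lower[OF assms] by (intro exI[of _ "exp (- (norm q / (1 - norm q) / (1 - norm q)))"]) auto

lemma poch1_upper:
  fixes q :: complex
  assumes "norm q < 1" "finite A"
  shows "norm (\<Prod>h\<in>A. 1 - q ^ Suc h) \<le> exp (norm q / (1 - norm q))"
proof -
  define r where "r = norm q"
  have r: "0 \<le> r" "r < 1" using assms by (auto simp: r_def)
  obtain n where n: "A \<subseteq> {..<n}" using \<open>finite A\<close> by (meson finite_nat_iff_bounded subset_eq lessThan_iff)
  have "norm (\<Prod>h\<in>A. 1 - q ^ Suc h) = (\<Prod>h\<in>A. norm (1 - q ^ Suc h))" by (rule prod_norm[of "\<lambda>h. 1 - q ^ Suc h" A, symmetric])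
  also have "\<dots> \<le> (\<Prod>h\<in>A. exp (r ^ Suc h))"
  proof (rule prod_mono)
    fix h assume "h \<in> A"
    have "norm (1 - q ^ Suc h) \<le> 1 + r ^ Suc h"
      using norm_triangle_ineq4[of 1 "q ^ Suc h"] by (simp add: r_def norm_power del: power_Suc)
    also have "\<dots> \<le> exp (r ^ Suc h)" by simp
    finally show "0 \<le> norm (1 - q ^ Suc h) \<and> norm (1 - q ^ Suc h) \<le> exp (r ^ Suc h)" by simp
  qed
  also have "\<dots> = exp (\<Sum>h\<in>A. r ^ Suc h)" using \<open>finite A\<close> by (simp add: exp_sum)
  also have "\<dots> \<le> exp (\<Sum>h<n. r ^ Suc h)"
    using n r by (intro exp_mono sum_mono2) auto
  also have "\<dots> \<le> exp (r / (1 - r))" using geom_partial_bound[OF r] by simp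
  finally show ?thesis by (simp add: r_def)
qed

lemma poch1_limit:
  assumes "norm q < 1"
  shows "\<exists>P. P \<noteq> 0 \<and> (\<lambda>n. poch1 q n) \<longlonglongrightarrow> P"
proof -
  define f where "f h = 1 - q ^ Suc h" for h
  have "summable (\<lambda>h. norm (f h - 1))"
  proof -
    have "summable (\<lambda>h. norm q ^ Suc h)" using assms by (simp add: summable_geometric)
    thus ?thesis by (simp add: f_def norm_power del: power_Suc)
  qed
  hence cp: "convergent_prod f"
    by (intro abs_convergent_prod_imp_convergent_prod summable_imp_abs_convergent_prod)
  have "(\<lambda>n. \<Prod>i\<le>n. f i) \<longlonglongrightarrow> prodinf f" by (rule convergent_prod_LIMSEQ[OF cp])
  hence "(\<lambda>n. poch1 q (Suc n)) \<longlonglongrightarrow> prodinf f"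
    by (simp add: poch1_def f_def lessThan_Suc_atMost)
  hence L: "(\<lambda>n. poch1 q n) \<longlonglongrightarrow> prodinf f" by (rule LIMSEQ_imp_Suc)
  obtain C where C: "C > 0" "\<And>n. C \<le> norm (poch1 q n)" using poch1_lower_pos[OF assms] by blast
  have "C \<le> norm (prodinf f)"
    by (rule LIMSEQ_le_const[OF tendsto_norm[OF L]]) (use C in auto)
  hence "prodinf f \<noteq> 0" using C by auto
  with L show ?thesis by blast
qed

lemma qbin_limit:
  assumes "norm q < 1"
  shows "(\<lambda>N. qbin q N c) \<longlonglongrightarrow> 1 / poch1 q c"
proof -
  obtain P where P: "P \<noteq> 0" "(\<lambda>n. poch1 q n) \<longlonglongrightarrow> P" using poch1_limit[OF assms] by blast
  have P2: "(\<lambda>n. poch1 q (n + c)) \<longlonglongrightarrow> P" by (rule LIMSEQ_ignore_initial_segment[OF P(2)])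
  have "(\<lambda>n. poch1 q (n + c) / (poch1 q c * poch1 q n)) \<longlonglongrightarrow> P / (poch1 q c * P)"
    using P poch1_nz[OF assms] by (intro tendsto_intros P2) auto
  moreover have "P / (poch1 q c * P) = 1 / poch1 q c" using P(1) by simp
  moreover have "qbin q (n + c) c = poch1 q (n + c) / (poch1 q c * poch1 q n)" for n
    by (simp add: qbin_def)
  ultimately have "(\<lambda>n. qbin q (n + c) c) \<longlonglongrightarrow> 1 / poch1 q c" by simp
  thus ?thesis by (rule LIMSEQ_offset)
qed

lemma qbin_bound:
  assumes "norm q < 1"
  shows "norm (qbin q N c) \<le> exp (norm q / (1 - norm q)) /
            (exp (- (norm q / (1 - norm q) / (1 - norm q))) * exp (- (norm q / (1 - norm q) / (1 - norm q))))"
proof (cases "c \<le> N")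
  case True
  define C where "C = exp (- (norm q / (1 - norm q) / (1 - norm q)))"
  have C: "C > 0" "\<And>n. C \<le> norm (poch1 q n)" using poch1_lower[OF assms] by (auto simp: C_def)
  have U: "norm (poch1 q N) \<le> exp (norm q / (1 - norm q))"
    unfolding poch1_def by (rule poch1_upper[OF assms]) simp
  have "norm (qbin q N c) = norm (poch1 q N) / (norm (poch1 q c) * norm (poch1 q (N - c)))"
    using True by (simp add: qbin_def norm_divide norm_mult)
  also have "\<dots> \<le> exp (norm q / (1 - norm q)) / (C * C)"
    using C U by (intro frac_le mult_mono) auto
  finally show ?thesis by (simp add: C_def)
next
  case False then show ?thesis by (simp add: qbin_def)
qed

lemma summable_quad:
  fixes r :: real and y :: real
  assumes "0 \<le> r" "r < 1" "0 \<le> y"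
  shows "summable (\<lambda>c. y ^ c * r ^ (c choose 2))"
proof -
  have "(\<lambda>n. y * r ^ n) \<longlonglongrightarrow> y * 0" using assms by (intro tendsto_intros) auto
  hence "eventually (\<lambda>n. y * r ^ n < 1/2) sequentially" by (intro order_tendstoD) auto
  then obtain N where N: "\<And>n. n \<ge> N \<Longrightarrow> y * r ^ n < 1/2" by (auto simp: eventually_sequentially)
  show ?thesis
  proof (rule summable_ratio_test[of "1/2" N])
    show "norm (y ^ Suc n * r ^ (Suc n choose 2)) \<le> 1/2 * norm (y ^ n * r ^ (n choose 2))" if "n \<ge> N" for n
    proof -
      have e: "Suc n choose 2 = (n choose 2) + n" by (simp add: numeral_2_eq_2)
      have "norm (y ^ Suc n * r ^ (Suc n choose 2)) = (y * r ^ n) * (y ^ n * r ^ (n choose 2))"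
        using assms unfolding e by (simp add: power_add abs_mult)
      also have "\<dots> \<le> 1/2 * (y ^ n * r ^ (n choose 2))"
        using N[OF that] assms by (intro mult_right_mono) auto
      finally show ?thesis using assms by simp
    qed
  qed simp
qed

lemma euler_product:
  assumes "norm q < 1"
  shows "(\<lambda>c. x ^ c * q ^ (c choose 2) / poch1 q c) sums prodinf (\<lambda>h. 1 + x * q ^ h)"
    and "summable (\<lambda>c. norm (x ^ c * q ^ (c choose 2) / poch1 q c))"
proof -
  define K where "K = exp (norm q / (1 - norm q)) /
            (exp (- (norm q / (1 - norm q) / (1 - norm q))) * exp (- (norm q / (1 - norm q) / (1 - norm q))))"
  define a where "a c N = x ^ c * q ^ (c choose 2) * qbin q N c" for c N
  define b where "b c = x ^ c * q ^ (c choose 2) / poch1 q c" for c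
  define M where "M c = (norm x ^ c * norm q ^ (c choose 2)) * K" for c
  have lim: "(\<lambda>N. a c N) \<longlonglongrightarrow> b c" for c
    unfolding a_def b_def using qbin_limit[OF assms, of c]
    by (auto intro!: tendsto_eq_intros)
  have bound: "norm (a c N) \<le> M c" for c N
  proof -
    have qb: "norm (qbin q N c) \<le> K" unfolding K_def by (rule qbin_bound[OF assms])
    have "norm (a c N) = (norm x ^ c * norm q ^ (c choose 2)) * norm (qbin q N c)"
      by (simp add: a_def norm_mult norm_power)
    also have "\<dots> \<le> (norm x ^ c * norm q ^ (c choose 2)) * K" by (intro mult_left_mono qb) auto
    finally show ?thesis by (simp add: M_def)
  qed
  have sM: "summable M"
    unfolding M_def using summable_quad[of "norm q" "norm x"] assms by (intro summable_mult2) auto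
  have T: "eventually (\<lambda>n. summable (\<lambda>k. norm (a k n))) sequentially \<and>
           summable (\<lambda>n. norm (b n)) \<and> ((\<lambda>n. suminf (\<lambda>k. a k n)) \<longlongrightarrow> suminf b) sequentially"
    by (rule tannerys_theorem[OF lim _ sM]) (auto intro!: always_eventually bound)
  have fin: "suminf (\<lambda>k. a k N) = (\<Prod>h<N. 1 + x * q ^ h)" for N
  proof -
    have "(\<lambda>k. a k N) sums (\<Sum>k\<le>N. a k N)"
      by (rule sums_finite) (auto simp: a_def qbin_def)
    hence "suminf (\<lambda>k. a k N) = (\<Sum>k\<le>N. a k N)" by (rule sums_unique[symmetric])
    also have "\<dots> = (\<Prod>h<N. 1 + x * q ^ h)" unfolding a_def by (rule qbinomial_finite[OF assms, symmetric])
    finally show ?thesis .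
  qed
  have L1: "(\<lambda>N. \<Prod>h<N. 1 + x * q ^ h) \<longlonglongrightarrow> suminf b" using T fin by simp
  have "summable (\<lambda>h. norm ((1 + x * q ^ h) - 1))"
    using assms by (simp add: norm_mult norm_power summable_geometric)
  hence cp: "convergent_prod (\<lambda>h. 1 + x * q ^ h)"
    by (intro abs_convergent_prod_imp_convergent_prod summable_imp_abs_convergent_prod)
  have "(\<lambda>n. \<Prod>i\<le>n. 1 + x * q ^ i) \<longlonglongrightarrow> prodinf (\<lambda>h. 1 + x * q ^ h)" by (rule convergent_prod_LIMSEQ[OF cp])
  hence "(\<lambda>n. \<Prod>h<Suc n. 1 + x * q ^ h) \<longlonglongrightarrow> prodinf (\<lambda>h. 1 + x * q ^ h)"
    by (simp add: lessThan_Suc_atMost)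
  moreover have "(\<lambda>n. \<Prod>h<Suc n. 1 + x * q ^ h) \<longlonglongrightarrow> suminf b" by (rule LIMSEQ_Suc[OF L1])
  ultimately have eq: "prodinf (\<lambda>h. 1 + x * q ^ h) = suminf b" by (rule LIMSEQ_unique)
  have sb: "summable b" using T by (blast intro: summable_norm_cancel)
  show "(\<lambda>c. x ^ c * q ^ (c choose 2) / poch1 q c) sums prodinf (\<lambda>h. 1 + x * q ^ h)"
  proof -
    have bb: "(\<lambda>c. x ^ c * q ^ (c choose 2) / poch1 q c) = b" by (simp add: b_def fun_eq_iff)
    show ?thesis unfolding eq bb by (rule summable_sums[OF sb])
  qed
  show "summable (\<lambda>c. norm (x ^ c * q ^ (c choose 2) / poch1 q c))" using T by (simp add: b_def)
qed

lemma has_sum_times: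
  fixes f g :: "_ \<Rightarrow> complex"
  assumes fa: "(f has_sum a) A" and gb: "(g has_sum b) B"
  shows "((\<lambda>(x,y). f x * g y) has_sum (a*b)) (A \<times> B)"
proof -
  have fs: "(\<lambda>x. norm (f x)) summable_on A"
    using fa summable_on_iff_abs_summable_on_complex has_sum_imp_summable by blast
  have gs: "(\<lambda>x. norm (g x)) summable_on B"
    using gb summable_on_iff_abs_summable_on_complex has_sum_imp_summable by blast
  have "(\<lambda>z. norm ((\<lambda>(x,y). f x * g y) z)) summable_on Sigma A (\<lambda>_. B)"
  proof (rule Infinite_Sum.abs_summable_on_Sigma_iff[where f="\<lambda>(x,y). f x * g y" and A=A and B="\<lambda>_. B", THEN iffD2], intro conjI ballI)
    fix x assume "x \<in> A"
    show "(\<lambda>y. norm (case (x, y) of (x, y) \<Rightarrow> f x * g y)) summable_on B"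
      using summable_on_cmult_right[OF gs, of "norm (f x)"] by (simp add: norm_mult)
  next
    have e: "infsum (\<lambda>y. norm (case (x, y) of (x, y) \<Rightarrow> f x * g y)) B = norm (f x) * infsum (\<lambda>y. norm (g y)) B" for x
      by (simp add: norm_mult infsum_cmult_right[OF gs])
    show "(\<lambda>x. norm (infsum (\<lambda>y. norm (case (x, y) of (x, y) \<Rightarrow> f x * g y)) B)) summable_on A"
    proof -
      have "(\<lambda>x. norm (f x) * norm (infsum (\<lambda>y. norm (g y)) B)) summable_on A"
        by (rule summable_on_cmult_left[OF fs])
      moreover have "(\<lambda>x. norm (infsum (\<lambda>y. norm (case (x, y) of (x, y) \<Rightarrow> f x * g y)) B))
          = (\<lambda>x. norm (f x) * norm (infsum (\<lambda>y. norm (g y)) B))"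
        by (rule ext, simp only: e real_norm_def abs_mult abs_norm_cancel)
      ultimately show ?thesis by (simp only:)
    qed
  qed
  hence S: "(\<lambda>(x,y). f x * g y) summable_on A \<times> B" by (rule abs_summable_summable)
  show ?thesis
  proof (rule has_sum_SigmaI[OF _ _ S])
    show "((\<lambda>y. case (x, y) of (x, y) \<Rightarrow> f x * g y) has_sum f x * b) B" for x
      using has_sum_cmult_right[OF gb, of "f x"] by simp
    show "((\<lambda>x. f x * b) has_sum a * b) A" by (rule has_sum_cmult_left[OF fa])
  qed
qed

lemma has_sum_geometric_complex:
  fixes z :: complex assumes "norm z < 1"
  shows "((\<lambda>k. z ^ k) has_sum 1 / (1 - z)) UNIV"
  by (rule norm_summable_imp_has_sum) (use assms in \<open>auto simp: norm_power summable_geometric geometric_sums\<close>)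

definition tn :: "complex \<Rightarrow> nat \<Rightarrow> complex" where
  "tn q n = q ^ (2*n*(n+1)) * qpoch q (q^2) n * qpoch_inf (- (q ^ (2*n+2))) q / qpoch (q^2) (q^2) n"

lemma qpoch_eq_poch1: "qpoch (p*p) (p*p) n = poch1 (p*p) n"
  unfolding qpoch_def poch1_def by (simp add: mult.assoc)

lemma rhs_term_has_sum:
  assumes "norm q < 1"
  shows "((\<lambda>(i,c). RR q n i c) has_sum tn q n) ({..n} \<times> UNIV)"
proof -
  have n2: "norm (q^2) < 1" using assms by (simp add: norm_power power_less_one_iff)
  define x where "x = q ^ (2*n+2)"
  define A where "A i = q ^ (2*n*(n+1)) * ((-q) ^ i * (q^2) ^ (i choose 2) * qbin (q^2) n i) / poch1 (q^2) n" for i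
  define B where "B c = x ^ c * q ^ (c choose 2) / poch1 q c" for c
  define E where "E = prodinf (\<lambda>h. 1 + x * q ^ h)"
  have hA: "(A has_sum (\<Sum>i\<le>n. A i)) {..n}" by (rule has_sum_finiteI) auto
  have hB: "(B has_sum E) UNIV"
    unfolding B_def E_def using euler_product[OF assms, of x]
    by (intro norm_summable_imp_has_sum) auto
  have 1: "((\<lambda>(i,c). A i * B c) has_sum (\<Sum>i\<le>n. A i) * E) ({..n} \<times> UNIV)"
    by (rule has_sum_times[OF hA hB])
  have qp: "qpoch q (q^2) n = (\<Sum>i\<le>n. (-q) ^ i * (q^2) ^ (i choose 2) * qbin (q^2) n i)"
  proof -
    have "qpoch q (q^2) n = (\<Prod>h<n. 1 + (-q) * (q^2) ^ h)" by (simp add: qpoch_def)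
    also have "\<dots> = (\<Sum>i\<le>n. (-q) ^ i * (q^2) ^ (i choose 2) * qbin (q^2) n i)"
      by (rule qbinomial_finite[OF n2])
    finally show ?thesis .
  qed
  have qp2: "qpoch (q^2) (q^2) n = poch1 (q^2) n" using qpoch_eq_poch1[of q n] by (simp add: power2_eq_square)
  have qi: "qpoch_inf (- (q ^ (2*n+2))) q = E" by (simp add: qpoch_inf_def E_def x_def)
  have tn: "tn q n = (\<Sum>i\<le>n. A i) * E"
  proof -
    have "(\<Sum>i\<le>n. A i) = q ^ (2*n*(n+1)) * qpoch q (q^2) n / poch1 (q^2) n"
      unfolding qp A_def by (simp add: sum_distrib_left sum_divide_distrib)
    thus ?thesis unfolding tn_def qp2 qi by (simp add: divide_inverse ac_simps)
  qed
  have eq: "A i * B c = RR q n i c" if "i \<le> n" for i c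
  proof -
    have nz: "poch1 (q^2) n \<noteq> 0" using poch1_nz[OF n2] .
    have "A i * B c = q ^ (2*n*(n+1)) * (-q) ^ i * q ^ (2*(i choose 2)) * (x ^ c * q ^ (c choose 2))
       / (poch1 (q^2) i * poch1 (q^2) (n-i) * poch1 q c)"
      unfolding A_def B_def qbin_def using that nz by (simp add: power_mult field_simps)
    also have "x ^ c * q ^ (c choose 2) = q ^ ((2*n+2)*c + (c choose 2))"
    proof -
      have "x ^ c = q ^ ((2*n+2)*c)" unfolding x_def by (rule power_mult[symmetric])
      thus ?thesis by (simp add: power_add)
    qed
    finally show ?thesis by (simp add: RR_def)
  qed
  have cong: "((\<lambda>(i,c). A i * B c) has_sum tn q n) ({..n} \<times> UNIV)
     \<longleftrightarrow> ((\<lambda>(i,c). RR q n i c) has_sum tn q n) ({..n} \<times> UNIV)"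
  proof (rule has_sum_cong)
    fix z assume "z \<in> {..n} \<times> (UNIV :: nat set)"
    then obtain i c where z: "z = (i, c)" "i \<le> n" by auto
    show "(\<lambda>(i,c). A i * B c) z = (\<lambda>(i,c). RR q n i c) z" using eq[OF z(2)] z(1) by simp
  qed
  show ?thesis using 1 cong unfolding tn by simp
qed

lemma poch1_lower_both:
  assumes "norm q < 1"
  shows "\<exists>C>0. \<forall>n. C \<le> norm (poch1 q n) \<and> C \<le> norm (poch1 (q^2) n)"
proof -
  have n2: "norm (q^2) < 1" using assms by (simp add: norm_power power_less_one_iff)
  obtain C1 where C1: "C1 > 0" "\<And>n. C1 \<le> norm (poch1 q n)" using poch1_lower_pos[OF assms] by blast
  obtain C2 where C2: "C2 > 0" "\<And>n. C2 \<le> norm (poch1 (q^2) n)" using poch1_lower_pos[OF n2] by blast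
  show ?thesis using C1 C2 by (intro exI[of _ "min C1 C2"]) (auto simp: min_le_iff_disj)
qed

lemma RR_bound:
  assumes "norm q < 1" "C > 0" "\<And>n. C \<le> norm (poch1 q n) \<and> C \<le> norm (poch1 (q^2) n)" "i \<le> n"
  shows "norm (RR q n i c) \<le> norm q ^ (n + i + c) / (C * C * C)"
proof -
  define r where "r = norm q"
  have r: "0 \<le> r" "r \<le> 1" using assms(1) by (auto simp: r_def)
  define E where "E = 2*n*(n+1) + i + 2*(i choose 2) + ((2*n+2)*c + (c choose 2))"
  have "norm (RR q n i c) = r ^ E / (norm (poch1 (q^2) i) * norm (poch1 (q^2) (n-i)) * norm (poch1 q c))"
    unfolding RR_def E_def r_def by (simp add: norm_mult norm_divide norm_power power_add)
  also have "\<dots> \<le> r ^ (n + i + c) / (C * C * C)"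
  proof (rule frac_le)
    have h1: "n \<le> 2*n*(n+1)" by (simp add: algebra_simps)
    have h2: "c \<le> (2*n+2)*c" by (simp add: algebra_simps)
    have "n + i + c \<le> E" unfolding E_def using h1 h2 by linarith
    thus "r ^ E \<le> r ^ (n + i + c)" using r by (intro power_decreasing) auto
    show "0 < C * C * C" using assms(2) by simp
    show "C * C * C \<le> norm (poch1 (q^2) i) * norm (poch1 (q^2) (n-i)) * norm (poch1 q c)"
      using assms(2,3) by (intro mult_mono) (auto intro: mult_nonneg_nonneg order_trans[OF less_imp_le[OF assms(2)]])
  qed (use r in auto)
  finally show ?thesis by (simp add: r_def)
qed

definition DD :: "(nat \<times> nat \<times> nat) set" where
  "DD = Sigma UNIV (\<lambda>n. {..n} \<times> UNIV)"

lemma RR_summable: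
  assumes "norm q < 1"
  shows "(\<lambda>(n,i,c). RR q n i c) summable_on DD"
proof -
  obtain C where C: "C > 0" "\<And>n. C \<le> norm (poch1 q n) \<and> C \<le> norm (poch1 (q^2) n)"
    using poch1_lower_both[OF assms] by blast
  define z where "z = complex_of_real (norm q)"
  have nz: "norm z < 1" using assms by (simp add: z_def)
  have g1: "((\<lambda>k. z ^ k) has_sum 1 / (1 - z)) UNIV" by (rule has_sum_geometric_complex[OF nz])
  have g2: "((\<lambda>(i,c). z ^ i * z ^ c) has_sum (1 / (1 - z)) * (1 / (1 - z))) (UNIV \<times> UNIV)"
    by (rule has_sum_times[OF g1 g1])
  have g3: "((\<lambda>(n,ic). z ^ n * (case ic of (i,c) \<Rightarrow> z ^ i * z ^ c)) has_sum (1 / (1 - z)) * ((1 / (1 - z)) * (1 / (1 - z)))) (UNIV \<times> (UNIV \<times> UNIV))"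
    by (rule has_sum_times[OF g1 g2])
  define G where "G = (\<lambda>(n::nat,i::nat,c::nat). z ^ n * (z ^ i * z ^ c) / of_real (C * C * C))"
  have "G summable_on UNIV \<times> (UNIV \<times> UNIV)"
  proof -
    have "(\<lambda>(n,ic). z ^ n * (case ic of (i,c) \<Rightarrow> z ^ i * z ^ c)) summable_on UNIV \<times> (UNIV \<times> UNIV)"
      using g3 by (rule has_sum_imp_summable)
    hence "(\<lambda>x. (\<lambda>(n,ic). z ^ n * (case ic of (i,c) \<Rightarrow> z ^ i * z ^ c)) x / of_real (C * C * C)) summable_on UNIV \<times> (UNIV \<times> UNIV)"
      by (simp add: divide_inverse summable_on_cmult_left)
    moreover have "(\<lambda>x. (\<lambda>(n,ic). z ^ n * (case ic of (i,c) \<Rightarrow> z ^ i * z ^ c)) x / of_real (C * C * C)) = G"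
      by (auto simp: G_def fun_eq_iff)
    ultimately show ?thesis by simp
  qed
  hence Gs: "G summable_on DD" by (rule summable_on_subset_banach) (auto simp: DD_def)
  hence Gn: "(\<lambda>x. norm (G x)) summable_on DD" using summable_on_iff_abs_summable_on_complex by blast
  have "(\<lambda>x. norm ((\<lambda>(n,i,c). RR q n i c) x)) summable_on DD"
  proof (rule Infinite_Sum.abs_summable_on_comparison_test[OF Gn])
    fix x assume "x \<in> DD"
    then obtain n i c where x: "x = (n,i,c)" "i \<le> n" by (auto simp: DD_def)
    have "norm (RR q n i c) \<le> norm q ^ (n + i + c) / (C * C * C)" by (rule RR_bound[OF assms C x(2)])
    also have "\<dots> = norm (G x)" using C(1) by (simp add: G_def x(1) z_def norm_mult norm_divide norm_power power_add)
    finally show "norm ((\<lambda>(n,i,c). RR q n i c) x) \<le> norm (G x)" by (simp add: x(1))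
  qed
  thus ?thesis by (rule abs_summable_summable)
qed

definition SS :: "complex \<Rightarrow> complex" where
  "SS q = infsum (\<lambda>(n,i,c). RR q n i c) DD"

lemma tn_has_sum:
  assumes "norm q < 1"
  shows "(tn q has_sum SS q) UNIV"
proof -
  have h: "((\<lambda>(n,i,c). RR q n i c) has_sum SS q) (Sigma UNIV (\<lambda>n. {..n} \<times> UNIV))"
    using RR_summable[OF assms] unfolding SS_def DD_def by (rule has_sum_infsum)
  show ?thesis
  proof (rule has_sum_SigmaD[OF h])
    fix n :: nat
    show "((\<lambda>y. (\<lambda>(n,i,c). RR q n i c) (n, y)) has_sum tn q n) ({..n} \<times> UNIV)"
      using rhs_term_has_sum[OF assms, of n] by (simp add: case_prod_beta')
  qed
qed

definition DD' :: "((nat \<times> nat) \<times> nat) set" where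
  "DD' = Sigma UNIV (\<lambda>(a,b). {i. 2*i \<le> b})"

lemma LL_has_sum:
  assumes "norm q < 1"
  shows "((\<lambda>(a,b). LL q a b) has_sum SS q) UNIV"
proof -
  have h: "((\<lambda>(n,i,c). RR q n i c) has_sum SS q) DD"
    using RR_summable[OF assms] unfolding SS_def by (rule has_sum_infsum)
  have h2: "((\<lambda>((a,b),i). RR q (a+i) i (b - 2*i)) has_sum SS q) DD'"
  proof -
    have "((\<lambda>(n,i,c). RR q n i c) has_sum SS q) DD = ((\<lambda>((a,b),i). RR q (a+i) i (b - 2*i)) has_sum SS q) DD'"
      by (rule has_sum_reindex_bij_witness[where j = "\<lambda>(n,i,c). ((n - i, c + 2*i), i)"
          and i = "\<lambda>((a,b),i). (a+i, i, b - 2*i)"]) (auto simp: DD_def DD'_def)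
    thus ?thesis using h by simp
  qed
  show ?thesis
  proof (rule has_sum_SigmaD[OF h2[unfolded DD'_def]])
    fix ab :: "nat \<times> nat"
    obtain a b where ab: "ab = (a,b)" by fastforce
    have fin: "finite {i. 2*i \<le> b}" by (rule finite_subset[of _ "{..b}"]) auto
    have e: "{i. 2*i \<le> b} = {i \<in> {..b}. 2*i \<le> b}" by auto
    have "(\<Sum>i\<in>{i. 2*i \<le> b}. RR q (a+i) i (b - 2*i)) = LL q a b"
      unfolding LL_eq_sum_RR[OF assms] e by (rule sum.inter_filter) simp
    hence "((\<lambda>i. RR q (a+i) i (b - 2*i)) has_sum LL q a b) {i. 2*i \<le> b}"
      using fin by (intro has_sum_finiteI) auto
    thus "((\<lambda>y. (\<lambda>((a,b),i). RR q (a+i) i (b - 2*i)) (ab, y)) has_sum (\<lambda>(a,b). LL q a b) ab)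
           ((\<lambda>(a,b). {i. 2*i \<le> b}) ab)"
      by (simp add: ab)
  qed
qed

definition gf :: "'x set \<Rightarrow> ('x \<Rightarrow> nat) \<Rightarrow> (complex \<Rightarrow> complex) \<Rightarrow> bool" where
  "gf A w G \<longleftrightarrow> (\<forall>q::complex. norm q < 1 \<longrightarrow> ((\<lambda>x. q ^ w x) has_sum G q) A)"

lemma gf_reindex:
  assumes "gf A (\<lambda>x. w (h x)) G" "inj_on h A"
  shows "gf (h ` A) w G"
  unfolding gf_def
proof (intro allI impI)
  fix q :: complex assume q: "norm q < 1"
  have "((\<lambda>x. q ^ w (h x)) has_sum G q) A" using assms(1) q by (auto simp: gf_def)
  thus "((\<lambda>x. q ^ w x) has_sum G q) (h ` A)"
    using has_sum_reindex[OF assms(2), of "\<lambda>x. q ^ w x"] by (simp add: o_def)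
qed

lemma gf_cong:
  assumes "gf A w G" "\<And>x. x \<in> A \<Longrightarrow> w x = w' x" "\<And>q. norm q < 1 \<Longrightarrow> G q = G' q"
  shows "gf A w' G'"
  unfolding gf_def
proof (intro allI impI)
  fix q :: complex assume q: "norm q < 1"
  have "((\<lambda>x. q ^ w x) has_sum G q) A" using assms(1) q by (auto simp: gf_def)
  moreover have "((\<lambda>x. q ^ w x) has_sum G q) A \<longleftrightarrow> ((\<lambda>x. q ^ w' x) has_sum G q) A"
    by (rule has_sum_cong) (simp add: assms(2))
  ultimately show "((\<lambda>x. q ^ w' x) has_sum G' q) A" using assms(3)[OF q] by simp
qed

lemma gf_shift:
  assumes "gf A w G"
  shows "gf A (\<lambda>x. k + w x) (\<lambda>q. q ^ k * G q)"
  unfolding gf_def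
proof (intro allI impI)
  fix q :: complex assume q: "norm q < 1"
  have "((\<lambda>x. q ^ w x) has_sum G q) A" using assms q by (auto simp: gf_def)
  from has_sum_cmult_right[OF this, of "q ^ k"]
  show "((\<lambda>x. q ^ (k + w x)) has_sum q ^ k * G q) A" by (simp add: power_add)
qed

lemma gf_Sigma:
  assumes inner: "\<And>x. x \<in> A \<Longrightarrow> gf (B x) (\<lambda>y. w (x, y)) (H x)"
  assumes outer: "\<And>q. norm q < 1 \<Longrightarrow> ((\<lambda>x. H x q) has_sum K q) A"
  shows "gf (Sigma A B) w K"
  unfolding gf_def
proof (intro allI impI)
  fix q :: complex assume q: "norm q < 1"
  define r where "r = norm q"
  define q' where "q' = complex_of_real r"
  have q': "norm q' < 1" using q by (simp add: q'_def r_def)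
  have inr: "((\<lambda>y. r ^ w (x, y)) has_sum Re (H x q')) (B x)" if "x \<in> A" for x
  proof -
    have "((\<lambda>y. q' ^ w (x, y)) has_sum H x q') (B x)" using inner[OF that] q' by (auto simp: gf_def)
    from has_sum_Re[OF this] show ?thesis by (simp add: q'_def)
  qed
  have outr: "(\<lambda>x. Re (H x q')) summable_on A"
    using has_sum_Re[OF outer[OF q']] by (rule has_sum_imp_summable)
  have "(\<lambda>z. r ^ w z) summable_on Sigma A B"
    by (rule summable_on_SigmaI[OF _ outr]) (use inr in \<open>auto simp: r_def\<close>)
  hence "(\<lambda>z. norm (q ^ w z)) summable_on Sigma A B" by (simp add: r_def norm_power)
  hence S: "(\<lambda>z. q ^ w z) summable_on Sigma A B" by (rule abs_summable_summable)
  show "((\<lambda>z. q ^ w z) has_sum K q) (Sigma A B)"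
  proof (rule has_sum_SigmaI[OF _ outer[OF q] S])
    fix x assume "x \<in> A"
    thus "((\<lambda>y. q ^ w (x, y)) has_sum H x q) (B x)" using inner q by (auto simp: gf_def)
  qed
qed

lemma has_sum_geometric_from:
  fixes z :: complex assumes "norm z < 1"
  shows "((\<lambda>y. z ^ y) has_sum z ^ k / (1 - z)) {k..}"
proof -
  have "((\<lambda>j. z ^ k * z ^ j) has_sum z ^ k * (1 / (1 - z))) UNIV"
    by (rule has_sum_cmult_right[OF has_sum_geometric_complex[OF assms]])
  hence "((\<lambda>y. z ^ y) \<circ> (\<lambda>j. j + k) has_sum z ^ k / (1 - z)) UNIV"
    by (simp add: o_def power_add mult.commute)
  moreover have "inj_on (\<lambda>j::nat. j + k) UNIV" by (auto simp: inj_on_def)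
  moreover have "(\<lambda>j::nat. j + k) ` UNIV = {k..}"
  proof -
    have "x \<in> (\<lambda>j. j + k) ` UNIV" if "k \<le> x" for x using that by (intro image_eqI[of x _ "x - k"]) auto
    thus ?thesis by auto
  qed
  ultimately show ?thesis using has_sum_reindex[of "\<lambda>j::nat. j + k" UNIV "\<lambda>y. z ^ y"] by simp
qed

definition NCs :: "nat \<Rightarrow> nat \<Rightarrow> nat set set" where
  "NCs b m = {X. finite X \<and> card X = b \<and> (\<forall>x\<in>X. m < x) \<and> (\<forall>j. \<not> (j \<in> X \<and> Suc j \<in> X))}"

lemma NCs_0: "NCs 0 m = {{}}"
  by (auto simp: NCs_def)

lemma NCs_Suc: "NCs (Suc b) m = (\<lambda>(y,Z). insert y Z) ` (Sigma {m<..} (\<lambda>y. NCs b (Suc y)))"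
proof (intro equalityI subsetI)
  fix X assume X: "X \<in> NCs (Suc b) m"
  hence fin: "finite X" and cX: "card X = Suc b" and gt: "\<forall>x\<in>X. m < x"
    and nc: "\<forall>j. \<not> (j \<in> X \<and> Suc j \<in> X)" by (auto simp: NCs_def)
  have ne: "X \<noteq> {}" using cX by auto
  define y where "y = Min X"
  have yX: "y \<in> X" using fin ne by (simp add: y_def)
  have ymin: "\<And>x. x \<in> X \<Longrightarrow> y \<le> x" using fin by (simp add: y_def)
  define Z where "Z = X - {y}"
  have "X = insert y Z" using yX by (auto simp: Z_def)
  moreover have "Z \<in> NCs b (Suc y)"
  proof -
    have sy: "Suc y \<notin> X" using nc yX by auto
    have "\<forall>x\<in>Z. Suc y < x"
    proof
      fix x assume "x \<in> Z"
      hence "x \<in> X" "x \<noteq> y" by (auto simp: Z_def)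
      moreover have "y \<le> x" using ymin \<open>x \<in> X\<close> .
      moreover have "x \<noteq> Suc y" using sy \<open>x \<in> X\<close> by auto
      ultimately show "Suc y < x" by arith
    qed
    moreover have "card Z = b" using cX yX fin by (simp add: Z_def)
    ultimately show ?thesis using fin nc by (auto simp: NCs_def Z_def)
  qed
  moreover have "y \<in> {m<..}" using gt yX by auto
  ultimately show "X \<in> (\<lambda>(y,Z). insert y Z) ` (Sigma {m<..} (\<lambda>y. NCs b (Suc y)))"
    by (intro image_eqI[of _ _ "(y, Z)"]) auto
next
  fix X assume "X \<in> (\<lambda>(y,Z). insert y Z) ` (Sigma {m<..} (\<lambda>y. NCs b (Suc y)))"
  then obtain y Z where X: "X = insert y Z" and y: "m < y" and Z: "Z \<in> NCs b (Suc y)" by auto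
  have fin: "finite Z" and cZ: "card Z = b" and gt: "\<forall>x\<in>Z. Suc y < x"
    and nc: "\<forall>j. \<not> (j \<in> Z \<and> Suc j \<in> Z)" using Z by (auto simp: NCs_def)
  have yZ: "y \<notin> Z" using gt by auto
  have "card X = Suc b" using fin yZ cZ by (simp add: X)
  moreover have "\<forall>x\<in>X. m < x" using gt y by (auto simp: X)
  moreover have "\<forall>j. \<not> (j \<in> X \<and> Suc j \<in> X)"
  proof (intro allI notI)
    fix j assume j: "j \<in> X \<and> Suc j \<in> X"
    show False
    proof (cases "j = y")
      case True then show ?thesis using j gt yZ by (auto simp: X)
    next
      case False
      hence "j \<in> Z" using j by (auto simp: X)
      hence "Suc j \<noteq> y" using gt by auto
      hence "Suc j \<in> Z" using j by (auto simp: X)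
      thus ?thesis using \<open>j \<in> Z\<close> nc by auto
    qed
  qed
  ultimately show "X \<in> NCs (Suc b) m" using fin by (auto simp: NCs_def X)
qed

lemma NCs_inj: "inj_on (\<lambda>(y,Z). insert y Z) (Sigma {m<..} (\<lambda>y. NCs b (Suc y)))"
proof (rule inj_onI, clarify)
  fix y Z y' Z'
  assume Z: "Z \<in> NCs b (Suc y)" and Z': "Z' \<in> NCs b (Suc y')" and eq: "insert y Z = insert y' Z'"
  have gt: "\<forall>x\<in>Z. Suc y < x" and gt': "\<forall>x\<in>Z'. Suc y' < x" using Z Z' by (auto simp: NCs_def)
  have "y = y'"
  proof (rule ccontr)
    assume "y \<noteq> y'"
    hence "y \<in> Z'" "y' \<in> Z" using eq by (metis insertE insertI1)+
    hence "Suc y' < y" "Suc y < y'" using gt gt' by blast+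
    thus False by arith
  qed
  moreover have "y \<notin> Z" "y' \<notin> Z'" using gt gt' by auto
  ultimately show "y = y' \<and> Z = Z'" using eq by (metis insert_ident)
qed

lemma NCs_gf: "gf (NCs b m) (\<lambda>X. \<Sum>X) (\<lambda>q. q ^ (b*(b+m)) / poch1 q b)"
proof (induction b arbitrary: m)
  case 0
  show ?case unfolding gf_def NCs_0 by (intro allI impI has_sum_finiteI) auto
next
  case (Suc b)
  define A where "A = Sigma {m<..} (\<lambda>y. NCs b (Suc y))"
  have inner: "gf (NCs b (Suc y)) (\<lambda>Z. (\<lambda>(y,Z). y + \<Sum>Z) (y, Z)) (\<lambda>q. q ^ y * (q ^ (b*(b+Suc y)) / poch1 q b))" for y
    using gf_shift[OF Suc.IH[of "Suc y"], of y] by simp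
  have outer: "((\<lambda>y. q ^ y * (q ^ (b*(b+Suc y)) / poch1 q b)) has_sum q ^ (Suc b*(Suc b+m)) / poch1 q (Suc b)) {m<..}"
    if q: "norm q < 1" for q
  proof -
    have nq: "norm (q ^ Suc b) < 1" using q by (simp add: norm_power power_less_one_iff del: power_Suc)
    have nz: "poch1 q b \<noteq> 0" by (rule poch1_nz[OF q])
    have g: "((\<lambda>y. (q ^ Suc b) ^ y) has_sum (q ^ Suc b) ^ Suc m / (1 - q ^ Suc b)) {Suc m..}"
      by (rule has_sum_geometric_from[OF nq])
    have g2: "((\<lambda>y. q ^ (b*(b+1)) / poch1 q b * (q ^ Suc b) ^ y) has_sum
        q ^ (b*(b+1)) / poch1 q b * ((q ^ Suc b) ^ Suc m / (1 - q ^ Suc b))) {Suc m..}"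
      by (rule has_sum_cmult_right[OF g])
    have e1: "q ^ y * (q ^ (b*(b+Suc y)) / poch1 q b) = q ^ (b*(b+1)) / poch1 q b * (q ^ Suc b) ^ y" for y
    proof -
      have "y + b*(b + Suc y) = b*(b+1) + Suc b * y" by (simp add: algebra_simps)
      hence "q ^ y * q ^ (b*(b+Suc y)) = q ^ (b*(b+1)) * (q ^ Suc b) ^ y"
        by (metis power_add power_mult)
      thus ?thesis by simp
    qed
    have e2: "q ^ (b*(b+1)) / poch1 q b * ((q ^ Suc b) ^ Suc m / (1 - q ^ Suc b))
        = q ^ (Suc b*(Suc b+m)) / poch1 q (Suc b)"
    proof -
      have "b*(b+1) + Suc b * Suc m = Suc b*(Suc b+m)" by (simp add: algebra_simps)
      hence "q ^ (b*(b+1)) * (q ^ Suc b) ^ Suc m = q ^ (Suc b*(Suc b+m))"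
        by (metis power_add power_mult)
      thus ?thesis by (simp add: poch1_Suc del: power_Suc)
    qed
    have "{m<..} = {Suc m..}" by auto
    thus ?thesis using g2 unfolding e1 e2 by simp
  qed
  have "gf A (\<lambda>(y,Z). y + \<Sum>Z) (\<lambda>q. q ^ (Suc b*(Suc b+m)) / poch1 q (Suc b))"
    unfolding A_def by (rule gf_Sigma[OF inner outer])
  hence "gf A (\<lambda>x. (\<lambda>X. \<Sum>X) ((\<lambda>(y,Z). insert y Z) x)) (\<lambda>q. q ^ (Suc b*(Suc b+m)) / poch1 q (Suc b))"
  proof (rule gf_cong)
    fix x assume "x \<in> A"
    then obtain y Z where x: "x = (y,Z)" and Z: "Z \<in> NCs b (Suc y)" by (auto simp: A_def)
    have "finite Z" "y \<notin> Z" using Z by (auto simp: NCs_def)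
    thus "(\<lambda>(y,Z). y + \<Sum>Z) x = (\<lambda>X. \<Sum>X) ((\<lambda>(y,Z). insert y Z) x)" by (simp add: x)
  qed simp
  hence "gf ((\<lambda>(y,Z). insert y Z) ` A) (\<lambda>X. \<Sum>X) (\<lambda>q. q ^ (Suc b*(Suc b+m)) / poch1 q (Suc b))"
    by (rule gf_reindex) (simp add: A_def NCs_inj)
  thus ?case by (simp add: A_def NCs_Suc)
qed

definition Blocks :: "nat \<Rightarrow> nat multiset set" where
  "Blocks a = {B. (\<forall>x\<in>#B. \<exists>i. 1 \<le> i \<and> i \<le> a \<and> x = 2*i) \<and> (\<forall>i. 1 \<le> i \<and> i \<le> a \<longrightarrow> 2 \<le> count B (2*i))}"

lemma Blocks_0: "Blocks 0 = {{#}}"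
  by (auto simp: Blocks_def)

lemma norm_pow_lt1: "norm (q::complex) < 1 \<Longrightarrow> 0 < k \<Longrightarrow> norm (q ^ k) < 1"
  by (simp add: norm_power power_less_one_iff)

lemma Blocks_Suc: "Blocks (Suc a) = (\<lambda>(B,m). B + replicate_mset m (2*Suc a)) ` (Blocks a \<times> {2..})"
proof (intro equalityI subsetI)
  fix M assume M: "M \<in> Blocks (Suc a)"
  define x where "x = 2 * Suc a"
  define m where "m = count M x"
  define B where "B = filter_mset (\<lambda>y. y \<noteq> x) M"
  have m2: "m \<ge> 2" using M by (auto simp: Blocks_def m_def x_def)
  have "M = B + replicate_mset m x"
    by (rule multiset_eqI) (auto simp: B_def m_def)
  moreover have "B \<in> Blocks a"
  proof -
    have "\<exists>i. 1 \<le> i \<and> i \<le> a \<and> y = 2*i" if "y \<in># B" for y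
    proof -
      have "y \<in># M" "y \<noteq> x" using that by (auto simp: B_def)
      then obtain i where "1 \<le> i" "i \<le> Suc a" "y = 2*i" using M by (auto simp: Blocks_def)
      moreover have "i \<noteq> Suc a" using \<open>y \<noteq> x\<close> \<open>y = 2*i\<close> by (auto simp: x_def)
      ultimately show ?thesis by auto
    qed
    moreover have "2 \<le> count B (2*i)" if "1 \<le> i" "i \<le> a" for i
    proof -
      have "2*i \<noteq> x" using that by (auto simp: x_def)
      thus ?thesis using M that by (auto simp: B_def Blocks_def)
    qed
    ultimately show ?thesis by (auto simp: Blocks_def)
  qed
  ultimately show "M \<in> (\<lambda>(B,m). B + replicate_mset m (2*Suc a)) ` (Blocks a \<times> {2..})"
    using m2 by (intro image_eqI[of _ _ "(B, m)"]) (auto simp: x_def)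
next
  fix M assume "M \<in> (\<lambda>(B,m). B + replicate_mset m (2*Suc a)) ` (Blocks a \<times> {2..})"
  then obtain B m where M: "M = B + replicate_mset m (2*Suc a)" and B: "B \<in> Blocks a" and m: "m \<ge> 2" by auto
  have "\<exists>i. 1 \<le> i \<and> i \<le> Suc a \<and> y = 2*i" if "y \<in># M" for y
  proof (cases "y \<in># B")
    case True
    then obtain i where "1 \<le> i" "i \<le> a" "y = 2*i" using B by (auto simp: Blocks_def)
    thus ?thesis by (intro exI[of _ i]) auto
  next
    case False
    hence "y = 2 * Suc a" using that by (auto simp: M split: if_splits)
    thus ?thesis by (intro exI[of _ "Suc a"]) auto
  qed
  moreover have "2 \<le> count M (2*i)" if "1 \<le> i" "i \<le> Suc a" for i
  proof (cases "i = Suc a")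
    case True thus ?thesis using m by (simp add: M)
  next
    case False
    hence "i \<le> a" using that by simp
    hence "2 \<le> count B (2*i)" using B that by (auto simp: Blocks_def)
    thus ?thesis by (simp add: M)
  qed
  ultimately show "M \<in> Blocks (Suc a)" by (auto simp: Blocks_def)
qed

lemma Blocks_no_top: "B \<in> Blocks a \<Longrightarrow> count B (2 * Suc a) = 0"
  by (auto simp: Blocks_def count_eq_zero_iff)

lemma Blocks_inj: "inj_on (\<lambda>(B,m). B + replicate_mset m (2*Suc a)) (Blocks a \<times> {2..})"
proof (rule inj_onI, clarify)
  fix B m B' m'
  assume B: "B \<in> Blocks a" and B': "B' \<in> Blocks a"
    and eq: "B + replicate_mset m (2 * Suc a) = B' + replicate_mset m' (2 * Suc a)"
  have "count (B + replicate_mset m (2 * Suc a)) (2 * Suc a) = count (B' + replicate_mset m' (2 * Suc a)) (2 * Suc a)"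
    using eq by simp
  hence mm: "m = m'" using Blocks_no_top[OF B] Blocks_no_top[OF B'] by simp
  thus "B = B' \<and> m = m'" using eq by simp
qed

lemma Blocks_gf: "gf (Blocks a) sum_mset (\<lambda>q. q ^ (2*a*(a+1)) / poch1 (q^2) a)"
proof (induction a)
  case 0
  show ?case unfolding gf_def Blocks_0 by (intro allI impI has_sum_finiteI) auto
next
  case (Suc a)
  define x where "x = 2 * Suc a"
  define c where "c q = (q ^ x) ^ 2 / (1 - q ^ x)" for q :: complex
  have inner: "gf {2..} (\<lambda>m. (\<lambda>(B,m). sum_mset B + x * m) (B, m)) (\<lambda>q. q ^ sum_mset B * c q)" for B
  proof -
    have "gf {2..} (\<lambda>m. x * m) c"
      unfolding gf_def
    proof (intro allI impI)
      fix q :: complex assume q: "norm q < 1"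
      have "norm (q ^ x) < 1" using norm_pow_lt1[OF q, of x] by (simp add: x_def)
      from has_sum_geometric_from[OF this, of 2]
      show "((\<lambda>m. q ^ (x * m)) has_sum c q) {2..}" by (simp add: c_def power_mult)
    qed
    from gf_shift[OF this, of "sum_mset B"] show ?thesis by simp
  qed
  have outer: "((\<lambda>B. q ^ sum_mset B * c q) has_sum (q ^ (2*a*(a+1)) / poch1 (q^2) a) * c q) (Blocks a)"
    if "norm q < 1" for q
    using Suc.IH that by (intro has_sum_cmult_left) (auto simp: gf_def)
  have "gf (Blocks a \<times> {2..}) (\<lambda>(B,m). sum_mset B + x * m) (\<lambda>q. (q ^ (2*a*(a+1)) / poch1 (q^2) a) * c q)"
    by (rule gf_Sigma[OF inner outer])
  hence "gf (Blocks a \<times> {2..}) (\<lambda>y. sum_mset ((\<lambda>(B,m). B + replicate_mset m x) y))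
     (\<lambda>q. q ^ (2*Suc a*(Suc a+1)) / poch1 (q^2) (Suc a))"
  proof (rule gf_cong)
    fix y :: "nat multiset \<times> nat" assume "y \<in> Blocks a \<times> {2..}"
    show "(\<lambda>(B,m). sum_mset B + x * m) y = sum_mset ((\<lambda>(B,m). B + replicate_mset m x) y)"
      by (cases y) (simp add: mult.commute)
  next
    fix q :: complex assume q: "norm q < 1"
    have n2: "norm (q^2) < 1" using q by (simp add: norm_power power_less_one_iff)
    have nz: "1 - q ^ x \<noteq> 0" using pow_ne_1[OF q, of x] by (simp add: x_def)
    have e: "2*Suc a*(Suc a+1) = 2*a*(a+1) + x * 2" by (simp add: x_def algebra_simps)
    have p: "poch1 (q^2) (Suc a) = poch1 (q^2) a * (1 - q ^ x)"
      by (simp only: poch1_Suc x_def power_mult)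
    show "q ^ (2*a*(a+1)) / poch1 (q^2) a * c q = q ^ (2*Suc a*(Suc a+1)) / poch1 (q^2) (Suc a)"
      unfolding c_def e p power_add power_mult by simp
  qed
  hence "gf ((\<lambda>(B,m). B + replicate_mset m x) ` (Blocks a \<times> {2..})) sum_mset
     (\<lambda>q. q ^ (2*Suc a*(Suc a+1)) / poch1 (q^2) (Suc a))"
    by (rule gf_reindex) (unfold x_def, rule Blocks_inj)
  thus ?case by (simp add: Blocks_Suc x_def)
qed

definition Tset :: "nat multiset set" where
  "Tset = {M. (\<forall>x\<in>#M. 0 < x) \<and> T_cond M}"

lemma Blocks_elem: "B \<in> Blocks a \<Longrightarrow> y \<in># B \<Longrightarrow> \<exists>i. 1 \<le> i \<and> i \<le> a \<and> y = 2*i"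
  by (auto simp: Blocks_def)

lemma Blocks_count0: "B \<in> Blocks a \<Longrightarrow> (odd y \<or> 2*a < y \<or> y = 0) \<Longrightarrow> count B y = 0"
  using Blocks_elem[of B a y] by (auto simp: count_eq_zero_iff)

lemma NCs_elem: "X \<in> NCs b m \<Longrightarrow> y \<in> X \<Longrightarrow> m < y"
  by (auto simp: NCs_def)

lemma count_obj:
  assumes "X \<in> NCs b m"
  shows "count (B + mset_set X) y = count B y + (if y \<in> X then 1 else 0)"
  using assms by (simp add: count_mset_set' NCs_def)

lemma R1_obj:
  assumes B: "B \<in> Blocks a" and X: "X \<in> NCs b (2*a+1)"
  shows "R1 (B + mset_set X) = 2*a"
proof -
  define M where "M = B + mset_set X"
  define S where "S = {j. 2 \<le> count M j}"
  have le: "j \<le> 2*a" if "j \<in> S" for j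
  proof (rule ccontr)
    assume "\<not> j \<le> 2*a"
    hence "count B j = 0" using Blocks_count0[OF B] by auto
    hence "count M j \<le> 1" using count_obj[OF X, of B j] by (simp add: M_def)
    thus False using that by (simp add: S_def)
  qed
  have "S \<union> {0} \<subseteq> {..2*a}" using le by auto
  hence fin: "finite (S \<union> {0})" by (rule finite_subset) simp
  have mem: "2*a \<in> S \<union> {0}"
  proof (cases "a = 0")
    case False
    hence "2 \<le> count B (2*a)" using B by (auto simp: Blocks_def)
    hence "2 \<le> count M (2*a)" using count_obj[OF X, of B "2*a"] by (simp add: M_def)
    thus ?thesis by (simp add: S_def)
  qed simp
  have "Max (S \<union> {0}) = 2*a" by (rule Max_eqI[OF fin]) (use le mem in auto)
  thus ?thesis by (simp add: R1_def M_def S_def)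
qed

lemma obj_in_Tset:
  assumes B: "B \<in> Blocks a" and X: "X \<in> NCs b (2*a+1)"
  shows "B + mset_set X \<in> Tset"
proof -
  define M where "M = B + mset_set X"
  have R: "R1 M = 2*a" using R1_obj[OF B X] by (simp add: M_def)
  have cnt: "count M y = count B y + (if y \<in> X then 1 else 0)" for y
    using count_obj[OF X] by (simp add: M_def)
  have Xgt: "y \<in> X \<Longrightarrow> 2*a+1 < y" for y using NCs_elem[OF X] by blast
  have finX: "finite X" using X by (simp add: NCs_def)
  have pos: "\<forall>x\<in>#M. 0 < x"
  proof
    fix x assume "x \<in># M"
    hence "x \<in># B \<or> x \<in> X" using finX by (auto simp: M_def)
    thus "0 < x" using Blocks_elem[OF B, of x] Xgt[of x] by auto
  qed
  have c1: "\<forall>j. odd j \<longrightarrow> count M j \<le> 1"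
    using Blocks_count0[OF B] by (auto simp: cnt)
  have c2: "\<forall>j. odd j \<and> j < R1 M + 2 \<longrightarrow> count M j = 0"
  proof (intro allI impI)
    fix j assume j: "odd j \<and> j < R1 M + 2"
    have "count B j = 0" using Blocks_count0[OF B] j by auto
    moreover have "j \<notin> X" using Xgt[of j] j R by auto
    ultimately show "count M j = 0" by (simp add: cnt)
  qed
  have c3: "\<forall>j. even j \<and> 0 < j \<and> j < R1 M \<longrightarrow> 2 \<le> count M j"
  proof (intro allI impI)
    fix j assume j: "even j \<and> 0 < j \<and> j < R1 M"
    then obtain i where i: "j = 2*i" by (auto elim: evenE)
    have "1 \<le> i" "i \<le> a" using j i R by auto
    hence "2 \<le> count B j" using B i by (auto simp: Blocks_def)
    thus "2 \<le> count M j" by (simp add: cnt)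
  qed
  have c4: "\<forall>j. \<not> (j \<in># M \<and> Suc j \<in># M)"
  proof (intro allI notI)
    fix j assume j: "j \<in># M \<and> Suc j \<in># M"
    have m1: "j \<in># B \<or> j \<in> X" and m2: "Suc j \<in># B \<or> Suc j \<in> X"
      using j finX by (auto simp: M_def)
    show False
    proof (cases "j \<in># B")
      case True
      then obtain i where i: "i \<le> a" "j = 2*i" using Blocks_elem[OF B] by blast
      show False
      proof (cases "Suc j \<in># B")
        case True
        then obtain i' where "Suc j = 2*i'" using Blocks_elem[OF B] by blast
        thus False using i by presburger
      next
        case False
        hence "Suc j \<in> X" using m2 by simp
        thus False using Xgt[of "Suc j"] i by simp
      qed
    next
      case False
      hence jX: "j \<in> X" using m1 by simp
      show False
      proof (cases "Suc j \<in># B")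
        case True
        then obtain i' where "i' \<le> a" "Suc j = 2*i'" using Blocks_elem[OF B] by blast
        thus False using Xgt[OF jX] by simp
      next
        case False
        hence "Suc j \<in> X" using m2 by simp
        thus False using jX X by (auto simp: NCs_def)
      qed
    qed
  qed
  have "M \<in> Tset" unfolding Tset_def T_cond_def using pos c1 c2 c3 c4 by blast
  thus ?thesis by (simp add: M_def)
qed

definition TD :: "((nat \<times> nat) \<times> (nat multiset \<times> nat set)) set" where
  "TD = Sigma UNIV (\<lambda>(a,b). Blocks a \<times> NCs b (2*a+1))"

definition objmap :: "(nat \<times> nat) \<times> (nat multiset \<times> nat set) \<Rightarrow> nat multiset" where
  "objmap = (\<lambda>(ab, (B, X)). B + mset_set X)"

lemma obj_recover:
  assumes B: "B \<in> Blocks a" and X: "X \<in> NCs b (2*a+1)"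
  shows "filter_mset (\<lambda>y. y \<le> 2*a) (B + mset_set X) = B"
    and "{y. y \<in># B + mset_set X \<and> 2*a < y} = X"
    and "card X = b"
proof -
  have finX: "finite X" and cX: "card X = b" using X by (auto simp: NCs_def)
  have Xgt: "y \<in> X \<Longrightarrow> 2*a+1 < y" for y using NCs_elem[OF X] by blast
  show "filter_mset (\<lambda>y. y \<le> 2*a) (B + mset_set X) = B"
  proof (rule multiset_eqI)
    fix y
    show "count (filter_mset (\<lambda>y. y \<le> 2*a) (B + mset_set X)) y = count B y"
    proof (cases "y \<le> 2*a")
      case True
      hence "y \<notin> X" using Xgt by force
      thus ?thesis using True count_obj[OF X, of B y] by simp
    next
      case False
      thus ?thesis using Blocks_count0[OF B, of y] by simp
    qed
  qed
  show "{y. y \<in># B + mset_set X \<and> 2*a < y} = X"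
  proof (intro equalityI subsetI)
    fix y assume "y \<in> {y. y \<in># B + mset_set X \<and> 2*a < y}"
    hence "y \<in># B \<or> y \<in> X" "2*a < y" using finX by auto
    moreover have "\<not> y \<in># B" if "2*a < y" using Blocks_count0[OF B, of y] that by (simp add: count_eq_zero_iff)
    ultimately show "y \<in> X" by auto
  next
    fix y assume "y \<in> X"
    thus "y \<in> {y. y \<in># B + mset_set X \<and> 2*a < y}" using finX Xgt[of y] by auto
  qed
  show "card X = b" by (rule cX)
qed

lemma objmap_inj: "inj_on objmap TD"
proof (rule inj_onI)
  fix x y assume x: "x \<in> TD" and y: "y \<in> TD" and eq: "objmap x = objmap y"
  obtain a b B X where xx: "x = ((a,b),(B,X))" "B \<in> Blocks a" "X \<in> NCs b (2*a+1)"
    using x by (auto simp: TD_def)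
  obtain a' b' B' X' where yy: "y = ((a',b'),(B',X'))" "B' \<in> Blocks a'" "X' \<in> NCs b' (2*a'+1)"
    using y by (auto simp: TD_def)
  have M: "B + mset_set X = B' + mset_set X'" using eq by (simp add: objmap_def xx yy)
  have "2*a = 2*a'" using R1_obj[OF xx(2,3)] R1_obj[OF yy(2,3)] M by simp
  hence aa: "a = a'" by simp
  have BB: "B = B'" using obj_recover(1)[OF xx(2,3)] obj_recover(1)[OF yy(2,3)] M aa by simp
  have XX: "X = X'" using obj_recover(2)[OF xx(2,3)] obj_recover(2)[OF yy(2,3)] M aa by simp
  have "b = b'" using obj_recover(3)[OF xx(2,3)] obj_recover(3)[OF yy(2,3)] XX by simp
  thus "x = y" using xx yy aa BB XX by simp
qed

lemma Tset_sub_image: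
  assumes M: "M \<in> Tset"
  shows "M \<in> objmap ` TD"
proof -
  have pos: "\<forall>x\<in>#M. 0 < x" and TC: "T_cond M" using M by (auto simp: Tset_def)
  have c1: "\<And>j. odd j \<Longrightarrow> count M j \<le> 1"
    and c2: "\<And>j. odd j \<Longrightarrow> j < R1 M + 2 \<Longrightarrow> count M j = 0"
    and c3: "\<And>j. even j \<Longrightarrow> 0 < j \<Longrightarrow> j < R1 M \<Longrightarrow> 2 \<le> count M j"
    and c4: "\<And>j. \<not> (j \<in># M \<and> Suc j \<in># M)"
    using TC by (auto simp: T_cond_def)
  define S where "S = {j. 2 \<le> count M j}"
  have finS: "finite (S \<union> {0})"
  proof -
    have "S \<subseteq> set_mset M" by (auto simp: S_def simp flip: count_greater_zero_iff)
    thus ?thesis by (auto intro: finite_subset)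
  qed
  have RS: "R1 M \<in> S \<union> {0}" unfolding R1_def S_def[symmetric] using finS by (intro Max_in) auto
  have Sle: "j \<le> R1 M" if "j \<in> S" for j unfolding R1_def S_def[symmetric] using finS that by (intro Max_ge) auto
  have Rev: "even (R1 M)"
  proof (cases "R1 M = 0")
    case False
    hence "R1 M \<in> S" using RS by auto
    hence "2 \<le> count M (R1 M)" by (simp add: S_def)
    thus ?thesis using c1[of "R1 M"] by auto
  qed simp
  define a where "a = R1 M div 2"
  have Ra: "R1 M = 2*a" using Rev by (simp add: a_def)
  define B where "B = filter_mset (\<lambda>y. y \<le> 2*a) M"
  define X where "X = {y. y \<in># M \<and> 2*a < y}"
  define b where "b = card X"
  have finX: "finite X" by (rule finite_subset[of _ "set_mset M"]) (auto simp: X_def)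
  have cnt1: "count M y \<le> 1" if "2*a < y" for y
  proof (rule ccontr)
    assume "\<not> count M y \<le> 1"
    hence "y \<in> S" by (simp add: S_def)
    thus False using Sle[of y] that Ra by simp
  qed
  have Meq: "M = B + mset_set X"
  proof (rule multiset_eqI)
    fix y
    show "count M y = count (B + mset_set X) y"
    proof (cases "y \<le> 2*a")
      case True
      thus ?thesis using finX by (simp add: B_def X_def count_mset_set')
    next
      case False
      hence "count M y \<le> 1" using cnt1 by simp
      hence c1: "count M y \<le> 1" .
      have "count M y = (if y \<in># M then 1 else 0)"
      proof (cases "y \<in># M")
        case True
        hence "0 < count M y" by (metis count_greater_zero_iff)
        hence "count M y = 1" using c1 by linarith
        thus ?thesis using True by simp
      next
        case False
        thus ?thesis by (simp add: not_in_iff)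
      qed
      thus ?thesis using False finX by (simp add: B_def X_def count_mset_set')
    qed
  qed
  have Bin: "B \<in> Blocks a"
  proof -
    have "\<exists>i. 1 \<le> i \<and> i \<le> a \<and> y = 2*i" if y: "y \<in># B" for y
    proof -
      have yM: "y \<in># M" and yle: "y \<le> 2*a" using y by (auto simp: B_def)
      have "0 < y" using pos yM by auto
      have "even y"
      proof (rule ccontr)
        assume "odd y"
        hence "count M y = 0" using c2[of y] yle Ra by simp
        thus False using yM by (simp add: count_eq_zero_iff)
      qed
      then obtain i where "y = 2*i" by (auto elim: evenE)
      thus ?thesis using \<open>0 < y\<close> yle by (intro exI[of _ i]) auto
    qed
    moreover have "2 \<le> count B (2*i)" if i: "1 \<le> i" "i \<le> a" for i
    proof (cases "i = a")
      case True
      hence "R1 M \<noteq> 0" using i Ra by simp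
      hence "R1 M \<in> S" using RS by auto
      hence "2 \<le> count M (2*a)" using Ra by (simp add: S_def)
      thus ?thesis using True by (simp add: B_def)
    next
      case False
      hence "2*i < R1 M" using i Ra by simp
      hence "2 \<le> count M (2*i)" using c3[of "2*i"] i by simp
      thus ?thesis using i by (simp add: B_def)
    qed
    ultimately show ?thesis by (auto simp: Blocks_def)
  qed
  have Xin: "X \<in> NCs b (2*a+1)"
  proof -
    have "2*a+1 < y" if "y \<in> X" for y
    proof -
      have yM: "y \<in># M" and ygt: "2*a < y" using that by (auto simp: X_def)
      have "y \<noteq> 2*a+1"
      proof
        assume "y = 2*a+1"
        hence "count M y = 0" using c2[of y] Ra by simp
        thus False using yM by (simp add: count_eq_zero_iff)
      qed
      thus ?thesis using ygt by simp
    qed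
    moreover have "\<not> (j \<in> X \<and> Suc j \<in> X)" for j using c4[of j] by (auto simp: X_def)
    ultimately show ?thesis using finX by (auto simp: NCs_def b_def)
  qed
  have "((a,b),(B,X)) \<in> TD" using Bin Xin by (simp add: TD_def)
  moreover have "objmap ((a,b),(B,X)) = M" using Meq by (simp add: objmap_def)
  ultimately show ?thesis by (metis image_eqI)
qed

lemma Tset_eq: "Tset = objmap ` TD"
proof
  show "Tset \<subseteq> objmap ` TD" using Tset_sub_image by blast
  show "objmap ` TD \<subseteq> Tset"
    using obj_in_Tset by (auto simp: TD_def objmap_def)
qed

lemma piece_gf: "gf (Blocks a \<times> NCs b (2*a+1)) (\<lambda>(B,X). sum_mset B + \<Sum>X) (\<lambda>q. LL q a b)"
proof -
  have inner: "gf (NCs b (2*a+1)) (\<lambda>X. (\<lambda>(B,X). sum_mset B + \<Sum>X) (B, X))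
      (\<lambda>q. q ^ sum_mset B * (q ^ (b*(b+(2*a+1))) / poch1 q b))" for B
    using gf_shift[OF NCs_gf[of b "2*a+1"], of "sum_mset B"] by simp
  have outer: "((\<lambda>B. q ^ sum_mset B * (q ^ (b*(b+(2*a+1))) / poch1 q b)) has_sum
      (q ^ (2*a*(a+1)) / poch1 (q^2) a) * (q ^ (b*(b+(2*a+1))) / poch1 q b)) (Blocks a)"
    if "norm q < 1" for q
    using Blocks_gf[of a] that by (intro has_sum_cmult_left) (auto simp: gf_def)
  have "gf (Blocks a \<times> NCs b (2*a+1)) (\<lambda>(B,X). sum_mset B + \<Sum>X)
      (\<lambda>q. (q ^ (2*a*(a+1)) / poch1 (q^2) a) * (q ^ (b*(b+(2*a+1))) / poch1 q b))"
    by (rule gf_Sigma[OF inner outer])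
  thus ?thesis by (rule gf_cong) (auto simp: LL_def add.assoc)
qed

lemma TD_gf: "gf TD (\<lambda>((a,b),(B,X)). sum_mset B + \<Sum>X) SS"
  unfolding TD_def
proof (rule gf_Sigma)
  fix ab :: "nat \<times> nat" assume "ab \<in> UNIV"
  obtain a b where ab: "ab = (a,b)" by fastforce
  show "gf ((\<lambda>(a,b). Blocks a \<times> NCs b (2*a+1)) ab) (\<lambda>y. (\<lambda>((a,b),(B,X)). sum_mset B + \<Sum>X) (ab, y))
        ((\<lambda>(a,b). \<lambda>q. LL q a b) ab)"
    using piece_gf[of a b] by (simp add: ab case_prod_beta')
next
  fix q :: complex assume "norm q < 1"
  thus "((\<lambda>ab. (\<lambda>(a,b). \<lambda>q. LL q a b) ab q) has_sum SS q) UNIV"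
    using LL_has_sum by (simp add: case_prod_beta')
qed

lemma Tset_gf: "gf Tset sum_mset SS"
proof -
  have "gf TD (\<lambda>x. sum_mset (objmap x)) SS"
  proof (rule gf_cong[OF TD_gf])
    fix x assume "x \<in> TD"
    then obtain a b B X where x: "x = ((a,b),(B,X))" "X \<in> NCs b (2*a+1)" by (auto simp: TD_def)
    have "finite X" using x(2) by (simp add: NCs_def)
    hence "sum_mset (mset_set X) = \<Sum>X" using sum_unfold_sum_mset[of "\<lambda>x. x" X] by simp
    thus "(\<lambda>((a,b),(B,X)). sum_mset B + \<Sum>X) x = sum_mset (objmap x)" by (simp add: x objmap_def)
  qed simp
  hence "gf (objmap ` TD) sum_mset SS" by (rule gf_reindex) (rule objmap_inj)
  thus ?thesis by (simp add: Tset_eq)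
qed

lemma size_le_sum_mset_pos: "(\<forall>x\<in>#M. 0 < x) \<Longrightarrow> size M \<le> sum_mset (M :: nat multiset)"
  by (induction M) auto

lemma mem_le_sum_mset: "x \<in># M \<Longrightarrow> x \<le> sum_mset (M :: nat multiset)"
proof -
  assume "x \<in># M"
  then obtain A where "M = add_mset x A" by (blast dest: multi_member_split)
  thus ?thesis by simp
qed

lemma finite_partitions: "finite (partitions n)"
proof -
  have "partitions n \<subseteq> (\<Union>k\<le>n. multisets_of_size {..n} k)"
  proof
    fix M assume "M \<in> partitions n"
    hence pos: "\<forall>x\<in>#M. 0 < x" and s: "sum_mset M = n" by (auto simp: partitions_def)
    have "set_mset M \<subseteq> {..n}" using mem_le_sum_mset s by auto
    moreover have "size M \<le> n" using size_le_sum_mset_pos[OF pos] s by simp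
    ultimately show "M \<in> (\<Union>k\<le>n. multisets_of_size {..n} k)" by (auto simp: multisets_of_size_def)
  qed
  moreover have "finite (\<Union>k\<le>n. multisets_of_size {..n} k)" by auto
  ultimately show ?thesis by (rule finite_subset)
qed

lemma T_series:
  assumes q: "norm q < 1"
  shows "((\<lambda>n. of_nat (T n) * q ^ n) has_sum SS q) UNIV"
proof -
  define F where "F n = {M \<in> partitions n. T_cond M}" for n
  define Sg where "Sg = Sigma (UNIV :: nat set) F"
  have h1: "((\<lambda>M. q ^ sum_mset M) has_sum SS q) Tset" using Tset_gf q by (auto simp: gf_def)
  have inj: "inj_on snd Sg" by (auto simp: inj_on_def Sg_def F_def partitions_def)
  have img: "snd ` Sg = Tset"
  proof (intro equalityI subsetI)
    fix M assume "M \<in> snd ` Sg"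
    thus "M \<in> Tset" by (auto simp: Sg_def F_def partitions_def Tset_def)
  next
    fix M assume M: "M \<in> Tset"
    hence "(sum_mset M, M) \<in> Sg" by (auto simp: Sg_def F_def partitions_def Tset_def)
    thus "M \<in> snd ` Sg" by (metis image_eqI snd_conv)
  qed
  have h2: "((\<lambda>z. q ^ sum_mset (snd z)) has_sum SS q) Sg"
    using has_sum_reindex[OF inj, of "\<lambda>M. q ^ sum_mset M"] h1 img by (simp add: o_def)
  show ?thesis
  proof (rule has_sum_SigmaD[OF h2[unfolded Sg_def]])
    fix n :: nat
    have fin: "finite (F n)" by (rule finite_subset[OF _ finite_partitions[of n]]) (auto simp: F_def)
    have "(\<Sum>M\<in>F n. q ^ sum_mset M) = (\<Sum>M\<in>F n. q ^ n)"
      by (rule sum.cong) (auto simp: F_def partitions_def)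
    also have "\<dots> = of_nat (T n) * q ^ n" by (simp add: T_def F_def)
    finally show "((\<lambda>y. q ^ sum_mset (snd (n, y))) has_sum of_nat (T n) * q ^ n) (F n)"
      using fin by (intro has_sum_finiteI) auto
  qed
qed

theorem theorem11:
  fixes q :: complex
  assumes "norm q < 1"
  shows "summable (\<lambda>n. q ^ (2*n*(n+1)) * qpoch q (q^2) n * qpoch_inf (- (q ^ (2*n+2))) q
                         / qpoch (q^2) (q^2) n)
       \<and> (\<lambda>n. of_nat (T n) * q ^ n) sums
           (\<Sum>n. q ^ (2*n*(n+1)) * qpoch q (q^2) n * qpoch_inf (- (q ^ (2*n+2))) q
                         / qpoch (q^2) (q^2) n)"
proof -
  have t: "tn q sums SS q" by (rule has_sum_imp_sums[OF tn_has_sum[OF assms]])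
  have s: "(\<lambda>n. of_nat (T n) * q ^ n) sums SS q" by (rule has_sum_imp_sums[OF T_series[OF assms]])
  have e: "(\<lambda>n. q ^ (2*n*(n+1)) * qpoch q (q^2) n * qpoch_inf (- (q ^ (2*n+2))) q
                         / qpoch (q^2) (q^2) n) = tn q"
    by (simp add: tn_def fun_eq_iff)
  show ?thesis unfolding e using t s by (simp add: sums_summable sums_unique[symmetric])
qed

end
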